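(* Let $d\ge2$ and let $f:\mathbb{R}^d\to\mathbb{R}$ be bounded, Borel-measurable, with $\mathrm{supp}(f)\subset[0,1]^d$. Then the value function $U$ defined below is a Pareto-monotone viscosity solution of \[U_{x_1}\cdots U_{x_d}=\frac{1}{d^d}f\quad\text{on }\mathbb{R}^d.\] Furthermore: (i) whenever $\mathrm{supp}(f)\subset\{x:0\leqq x\leqq z\}$ for some $z\in\mathbb{R}^d$, we have $U(x_1,\dots,x_d)=U(\min(x_1,z_1),\dots,\min(x_d,z_d))$ for all $x\in\mathbb{R}^d_+$; (ii) $U(x)=0$ for every $x\in\mathbb{R}^d\setminus\mathbb{R}^d_+$.
   Context: For $x,y\in\mathbb{R}^d$, $x\leqq y$ means $x_i\le y_i$ for all $i$; $\mathbb{R}^d_+=\{x:x_i>0\ \forall i\}$. Let $\mathcal{A}$ be the set of $\gamma\in C^1([0,1];\mathbb{R}^d)$ such that for every $t$, all components of $\gamma'(t)$ are nonnegative and $\gamma'(t)\ne0$. $J(\gamma)=\int_0^1 f(\gamma(t))^{1/d}(\gamma_1'(t)\cdots\gamma_d'(t))^{1/d}\,dt$ and $U(x)=\sup\{J(\gamma):\gamma\in\mathcal{A},\ \gamma(1)\leqq x\}$. A function $u$ is Pareto-monotone if $x\leqq y$ implies $u(x)\le u(y)$. Superdifferential $D^+u(x)$: all $p$ with $u(y)\le u(x)+\langle p,y-x\rangle+o(|y-x|)$ as $y\to x$; subdifferential $D^-u(x)$: all $p$ with $u(y)\ge u(x)+\langle p,y-x\rangle+o(|y-x|)$. For bounded $g$,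 $g^*(x)=\limsup_{r\searrow0}\sup\{g(y):|x-y|\le r\}$ and $g_*=-(-g)^*$. A continuous $u$ is a viscosity solution of $u_{x_1}\cdots u_{x_d}=g$ on an open set $\mathcal O$ if for all $x\in\mathcal O$: $p_1\cdots p_d\le g^*(x)$ for all $p\in D^+u(x)$, and $p_1\cdots p_d\ge g_*(x)$ for all $p\in D^-u(x)$. *)

theory Defs
  imports "HOL-Analysis.Analysis"
begin

text \<open>Points of R^d are elements of real^'n with d = CARD('n).
  The order \<le> on real^'n is the componentwise (Pareto) order.\<close>

definition admissible :: "(real \<Rightarrow> real^'n) \<Rightarrow> bool" where
  "admissible \<gamma> \<longleftrightarrow>
     (\<exists>g. continuous_on {0..1} g \<and>
          (\<forall>t\<in>{0..1}. (\<gamma> has_vector_derivative g t) (at t within {0..1})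
                      \<and> (\<forall>i. 0 \<le> g t $ i) \<and> g t \<noteq> 0))"

definition Jfun :: "(real^'n \<Rightarrow> real) \<Rightarrow> (real \<Rightarrow> real^'n) \<Rightarrow> real" where
  "Jfun f \<gamma> = integral {0..1}
     (\<lambda>t. root CARD('n) (f (\<gamma> t)) *
          root CARD('n) (\<Prod>i\<in>UNIV. vector_derivative \<gamma> (at t within {0..1}) $ i))"

definition Ufun :: "(real^'n \<Rightarrow> real) \<Rightarrow> real^'n \<Rightarrow> real" where
  "Ufun f x = Sup {Jfun f \<gamma> | \<gamma>. admissible \<gamma> \<and> \<gamma> 1 \<le> x}"

definition pareto_monotone :: "(real^'n \<Rightarrow> real) \<Rightarrow> bool" where
  "pareto_monotone u \<longleftrightarrow> (\<forall>x y. x \<le> y \<longrightarrow> u x \<le> u y)"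

definition superdiff :: "(real^'n \<Rightarrow> real) \<Rightarrow> real^'n \<Rightarrow> (real^'n) set" where
  "superdiff u x = {p. \<forall>\<epsilon>>0. \<exists>\<delta>>0. \<forall>y. norm (y - x) < \<delta> \<longrightarrow>
       u y \<le> u x + inner p (y - x) + \<epsilon> * norm (y - x)}"

definition subdiff :: "(real^'n \<Rightarrow> real) \<Rightarrow> real^'n \<Rightarrow> (real^'n) set" where
  "subdiff u x = {p. \<forall>\<epsilon>>0. \<exists>\<delta>>0. \<forall>y. norm (y - x) < \<delta> \<longrightarrow>
       u y \<ge> u x + inner p (y - x) - \<epsilon> * norm (y - x)}"

text \<open>Upper semicontinuous envelope: limsup as r decreases to 0 of sup over cball x r;
  the inner sup is nonincreasing in r, so the limit equals the infimum over r > 0.\<close>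
definition usc_env :: "(real^'n \<Rightarrow> real) \<Rightarrow> real^'n \<Rightarrow> real" where
  "usc_env g x = Inf ((\<lambda>r. Sup (g ` cball x r)) ` {0<..})"

definition lsc_env :: "(real^'n \<Rightarrow> real) \<Rightarrow> real^'n \<Rightarrow> real" where
  "lsc_env g x = - usc_env (\<lambda>y. - g y) x"

definition viscosity_solution ::
  "(real^'n \<Rightarrow> real) \<Rightarrow> (real^'n \<Rightarrow> real) \<Rightarrow> (real^'n) set \<Rightarrow> bool" where
  "viscosity_solution u g S \<longleftrightarrow> open S \<and> continuous_on S u \<and>
     (\<forall>x\<in>S. (\<forall>p\<in>superdiff u x. (\<Prod>i\<in>UNIV. p $ i) \<le> usc_env g x) \<and>
            (\<forall>p\<in>subdiff u x. (\<Prod>i\<in>UNIV. p $ i) \<ge> lsc_env g x))"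

definition support :: "(real^'n \<Rightarrow> real) \<Rightarrow> (real^'n) set" where
  "support f = closure {x. f x \<noteq> 0}"

end

theory Submission
  imports Defs
begin


lemma amgm:
  fixes x :: "'n::finite \<Rightarrow> real"
  assumes "\<And>i. 0 \<le> x i"
  shows "root CARD('n) (\<Prod>i\<in>UNIV. x i) \<le> (\<Sum>i\<in>UNIV. x i) / CARD('n)"
proof -
  have "(\<Prod>i\<in>UNIV. x i) powr (1 / card (UNIV::'n set)) \<le> (\<Sum>i \<in> UNIV. x i / card (UNIV::'n set))"
    by (rule arith_geom_mean) (auto simp: assms)
  moreover have "root CARD('n) (\<Prod>i\<in>UNIV. x i) = (\<Prod>i\<in>UNIV. x i) powr (1 / card (UNIV::'n set))"
    by (rule root_powr_inverse) (auto simp: assms prod_nonneg)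
  ultimately show ?thesis by (simp add: sum_divide_distrib)
qed

lemma amgm_weighted:
  fixes x l :: "'n::finite \<Rightarrow> real"
  assumes "\<And>i. 0 \<le> x i" "\<And>i. 0 < l i"
  shows "root CARD('n) (\<Prod>i\<in>UNIV. x i) \<le> (\<Sum>i\<in>UNIV. l i * x i) / (CARD('n) * root CARD('n) (\<Prod>i\<in>UNIV. l i))"
proof -
  have lp: "0 < root CARD('n) (\<Prod>i\<in>UNIV. l i)"
    using assms by (simp add: prod_pos)
  have "root CARD('n) (\<Prod>i\<in>UNIV. l i * x i) \<le> (\<Sum>i\<in>UNIV. l i * x i) / CARD('n)"
    using assms by (intro amgm) (simp add: less_imp_le)
  moreover have "root CARD('n) (\<Prod>i\<in>UNIV. l i * x i) = root CARD('n) (\<Prod>i\<in>UNIV. l i) * root CARD('n) (\<Prod>i\<in>UNIV. x i)"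
    by (simp add: prod.distrib real_root_mult)
  ultimately show ?thesis using lp
    by (simp add: field_simps)
qed

definition dv :: "(real \<Rightarrow> real^'n) \<Rightarrow> (real \<Rightarrow> real^'n) \<Rightarrow> bool" where
  "dv \<gamma> g \<longleftrightarrow> continuous_on {0..1} g \<and>
          (\<forall>t\<in>{0..1}. (\<gamma> has_vector_derivative g t) (at t within {0..1})
                      \<and> (\<forall>i. 0 \<le> g t $ i) \<and> g t \<noteq> 0)"

lemma admissible_dv: "admissible \<gamma> \<longleftrightarrow> (\<exists>g. dv \<gamma> g)"
  unfolding admissible_def dv_def by blast

definition integ :: "(real^'n \<Rightarrow> real) \<Rightarrow> (real \<Rightarrow> real^'n) \<Rightarrow> real \<Rightarrow> real" where
  "integ f \<gamma> t = root CARD('n) (f (\<gamma> t)) *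
          root CARD('n) (\<Prod>i\<in>UNIV. vector_derivative \<gamma> (at t within {0..1}) $ i)"

lemma Jfun_integ: "Jfun f \<gamma> = integral {0..1} (integ f \<gamma>)"
  unfolding Jfun_def integ_def ..

lemma dv_vd: "dv \<gamma> g \<Longrightarrow> t \<in> {0..1} \<Longrightarrow> vector_derivative \<gamma> (at t within {0..1}) = g t"
  unfolding dv_def by (intro vector_derivative_within_closed_interval) auto

lemma dv_integ: fixes f :: "real^'n \<Rightarrow> real" and \<gamma> :: "real \<Rightarrow> real^'n" shows "dv \<gamma> g \<Longrightarrow> t \<in> {0..1} \<Longrightarrow>
   integ f \<gamma> t = root CARD('n) (f (\<gamma> t)) * root CARD('n) (\<Prod>i\<in>UNIV. g t $ i)"
  unfolding integ_def by (simp add: dv_vd)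

lemma dv_cont: "dv \<gamma> g \<Longrightarrow> continuous_on {0..1} \<gamma>"
  unfolding dv_def continuous_on_eq_continuous_within has_vector_derivative_def
  by (meson has_derivative_continuous)

lemma dv_ftc:
  assumes "dv \<gamma> g" "0 \<le> a" "a \<le> b" "b \<le> 1"
  shows "(g has_integral (\<gamma> b - \<gamma> a)) {a..b}"
proof (rule fundamental_theorem_of_calculus)
  fix x assume x: "x \<in> {a..b}"
  then have "(\<gamma> has_vector_derivative g x) (at x within {0..1})"
    using assms unfolding dv_def by auto
  then show "(\<gamma> has_vector_derivative g x) (at x within {a..b})"
    by (rule has_vector_derivative_within_subset) (use assms in auto)
qed fact

lemma dv_mono:
  assumes "dv \<gamma> g" "0 \<le> a" "a \<le> b" "b \<le> 1"
  shows "\<gamma> a $ i \<le> \<gamma> b $ i"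
proof -
  have h: "(g has_integral (\<gamma> b - \<gamma> a)) {a..b}" using dv_ftc[OF assms] .
  have "((\<lambda>t. g t $ i) has_integral (\<gamma> b - \<gamma> a) $ i) {a..b}"
    using has_integral_linear[OF h bounded_linear_vec_nth[of i]] by (simp add: o_def)
  then have "0 \<le> (\<gamma> b - \<gamma> a) $ i"
    by (rule has_integral_nonneg) (use assms in \<open>auto simp: dv_def\<close>)
  then show ?thesis by simp
qed

lemma dv_mono_vec:
  assumes "dv \<gamma> g" "0 \<le> a" "a \<le> b" "b \<le> 1"
  shows "\<gamma> a \<le> \<gamma> b"
  using dv_mono[OF assms] by (simp add: less_eq_vec_def)

lemma integ_integrable:
  fixes f :: "real^'n \<Rightarrow> real" and \<gamma> :: "real \<Rightarrow> real^'n"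
  assumes "dv \<gamma> g" "f \<in> borel_measurable borel" "\<And>x. 0 \<le> f x" "\<And>x. f x \<le> B"
  shows "integ f \<gamma> integrable_on {0..1}"
proof -
  have m1: "\<gamma> \<in> borel_measurable (lebesgue_on {0..1})"
    using dv_cont[OF assms(1)] by (intro continuous_imp_measurable_on_sets_lebesgue) auto
  have m2: "(\<lambda>t. root CARD('n) (f (\<gamma> t))) \<in> borel_measurable (lebesgue_on {0..1})"
    using measurable_compose[OF measurable_compose[OF m1 assms(2)] borel_measurable_root]
    by (simp add: o_def)
  have b: "bounded ((\<lambda>t. root CARD('n) (f (\<gamma> t))) ` {0..1})"
    unfolding bounded_iff
    by (rule exI[of _ "root CARD('n) B"]) (use assms in \<open>auto\<close>)
  have c: "continuous_on {0..1} (\<lambda>t. root CARD('n) (\<Prod>i\<in>UNIV. g t $ i))"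
    using assms(1) unfolding dv_def
    by (intro continuous_intros) auto
  have "(\<lambda>t. root CARD('n) (f (\<gamma> t)) * root CARD('n) (\<Prod>i\<in>UNIV. g t $ i)) absolutely_integrable_on {0..1}"
    by (rule absolutely_integrable_bounded_measurable_product_real[OF m2 _ b absolutely_integrable_continuous_real[OF c]]) auto
  then have "(\<lambda>t. root CARD('n) (f (\<gamma> t)) * root CARD('n) (\<Prod>i\<in>UNIV. g t $ i)) integrable_on {0..1}"
    using set_lebesgue_integral_eq_integral(1) by blast
  then show ?thesis
    by (subst integrable_cong[where g="\<lambda>t. root CARD('n) (f (\<gamma> t)) * root CARD('n) (\<Prod>i\<in>UNIV. g t $ i)"])
       (auto simp: dv_integ[OF assms(1)])
qed

lemma integ_nonneg:
  fixes f :: "real^'n \<Rightarrow> real" and \<gamma> :: "real \<Rightarrow> real^'n"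
  assumes "dv \<gamma> g" "\<And>x. 0 \<le> f x" "t \<in> {0..1}"
  shows "0 \<le> integ f \<gamma> t"
  using assms by (simp add: dv_integ dv_def prod_nonneg)

lemma integ_integrable_sub:
  fixes f :: "real^'n \<Rightarrow> real" and \<gamma> :: "real \<Rightarrow> real^'n"
  assumes "dv \<gamma> g" "f \<in> borel_measurable borel" "\<And>x. 0 \<le> f x" "\<And>x. f x \<le> B"
    "0 \<le> a" "b \<le> 1"
  shows "integ f \<gamma> integrable_on {a..b}"
  by (rule integrable_subinterval_real[OF integ_integrable[OF assms(1-4)]]) (use assms(5,6) in auto)

lemma integ_bound:
  fixes f :: "real^'n \<Rightarrow> real" and \<gamma> :: "real \<Rightarrow> real^'n"
  assumes "dv \<gamma> g" "f \<in> borel_measurable borel" "\<And>x. 0 \<le> f x" "\<And>x. f x \<le> B"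
    "0 \<le> a" "a \<le> b" "b \<le> 1" "\<And>t. t \<in> {a..b} \<Longrightarrow> f (\<gamma> t) \<le> M" "0 < e"
  shows "integral {a..b} (integ f \<gamma>) \<le> root CARD('n) M * root CARD('n) (\<Prod>i\<in>UNIV. (\<gamma> b - \<gamma> a) $ i + e)"
proof -
  define D where "D = \<gamma> b - \<gamma> a"
  have D0: "0 \<le> D $ i" for i using dv_mono[OF assms(1,5,6,7)] by (simp add: D_def)
  define L :: "real^'n" where "L = (\<chi> i. 1 / (D $ i + e))"
  have Lpos: "0 < L $ i" for i using D0[of i] assms(9) by (simp add: L_def)
  define Lam where "Lam = root CARD('n) (\<Prod>i\<in>UNIV. L $ i)"
  have Lam_pos: "0 < Lam" unfolding Lam_def using Lpos by (simp add: prod_pos)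
  have M0: "0 \<le> M" using assms(8)[of a] assms(3)[of "\<gamma> a"] assms(6) by auto
  have ftc: "(g has_integral D) {a..b}" unfolding D_def by (rule dv_ftc[OF assms(1,5,6,7)])
  have "((\<lambda>t. inner L (g t)) has_integral inner L D) {a..b}"
    using has_integral_linear[OF ftc bounded_linear_inner_right[of L]] by (simp add: o_def)
  then have hint: "((\<lambda>t. root CARD('n) M / (CARD('n) * Lam) * inner L (g t)) has_integral
       root CARD('n) M / (CARD('n) * Lam) * inner L D) {a..b}"
    by (rule has_integral_mult_right)
  have le: "integ f \<gamma> t \<le> root CARD('n) M / (CARD('n) * Lam) * inner L (g t)" if t: "t \<in> {a..b}" for t
  proof -
    have t01: "t \<in> {0..1}" using t assms by auto
    have g0: "0 \<le> g t $ i" for i using assms(1) t01 by (auto simp: dv_def)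
    have "root CARD('n) (\<Prod>i\<in>UNIV. g t $ i) \<le> (\<Sum>i\<in>UNIV. L $ i * g t $ i) / (CARD('n) * Lam)"
      unfolding Lam_def by (rule amgm_weighted) (use g0 Lpos in auto)
    also have "\<dots> = inner L (g t) / (CARD('n) * Lam)" by (simp add: inner_vec_def)
    finally have A: "root CARD('n) (\<Prod>i\<in>UNIV. g t $ i) \<le> inner L (g t) / (CARD('n) * Lam)" .
    have B: "root CARD('n) (f (\<gamma> t)) \<le> root CARD('n) M" using assms(8)[OF t] by simp
    have "integ f \<gamma> t = root CARD('n) (f (\<gamma> t)) * root CARD('n) (\<Prod>i\<in>UNIV. g t $ i)"
      by (rule dv_integ[OF assms(1) t01])
    also have "\<dots> \<le> root CARD('n) M * (inner L (g t) / (CARD('n) * Lam))"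
      by (rule mult_mono[OF B A]) (use M0 g0 assms(3) in \<open>auto simp: prod_nonneg\<close>)
    finally show ?thesis by simp
  qed
  have "integral {a..b} (integ f \<gamma>) \<le> root CARD('n) M / (CARD('n) * Lam) * inner L D"
  proof -
    have "integral {a..b} (integ f \<gamma>) \<le> integral {a..b} (\<lambda>t. root CARD('n) M / (CARD('n) * Lam) * inner L (g t))"
      by (rule integral_le[OF integ_integrable_sub[OF assms(1-5,7)] hint[THEN has_integral_integrable] le])
    then show ?thesis by (simp only: integral_unique[OF hint])
  qed
  also have "\<dots> \<le> root CARD('n) M / (CARD('n) * Lam) * CARD('n)"
  proof (rule mult_left_mono)
    have "inner L D = (\<Sum>i\<in>UNIV. D $ i / (D $ i + e))" by (simp add: inner_vec_def L_def)
    also have "\<dots> \<le> (\<Sum>i\<in>(UNIV::'n set). 1)"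
    proof -
      have "D $ i / (D $ i + e) \<le> 1" for i
      proof -
        have "0 < D $ i + e" using D0[of i] assms(9) by simp
        then show ?thesis using assms(9) by (simp add: divide_le_eq_1)
      qed
      then show ?thesis by (meson sum_mono)
    qed
    finally show "inner L D \<le> CARD('n)" by simp
  qed (use M0 Lam_pos in auto)
  also have "\<dots> = root CARD('n) M / Lam" by simp
  also have "1 / Lam = root CARD('n) (\<Prod>i\<in>UNIV. (\<gamma> b - \<gamma> a) $ i + e)"
    unfolding Lam_def L_def D_def by (simp add: prod_dividef real_root_divide)
  then have "root CARD('n) M / Lam = root CARD('n) M * root CARD('n) (\<Prod>i\<in>UNIV. (\<gamma> b - \<gamma> a) $ i + e)"
    by (metis times_divide_eq_right mult.right_neutral)
  finally show ?thesis .
qed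




lemma integ_zero:
  fixes f :: "real^'n \<Rightarrow> real" and \<gamma> :: "real \<Rightarrow> real^'n"
  assumes "f (\<gamma> t) = 0" shows "integ f \<gamma> t = 0"
  using assms by (simp add: integ_def)

lemma integral_zero_but_end:
  fixes h :: "real \<Rightarrow> real"
  assumes "\<And>t. t \<in> {a..b} \<Longrightarrow> t \<noteq> c \<Longrightarrow> h t = 0"
  shows "integral {a..b} h = 0"
proof -
  have "integral {a..b} h = integral {a..b} (\<lambda>t. 0)"
    by (rule integral_spike[of "{c}"]) (use assms in auto)
  then show ?thesis by simp
qed

lemma integ_bound_box:
  fixes f :: "real^'n \<Rightarrow> real" and \<gamma> :: "real \<Rightarrow> real^'n"
  assumes "dv \<gamma> g" "f \<in> borel_measurable borel" "\<And>x. 0 \<le> f x" "\<And>x. f x \<le> B"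
    "0 \<le> s" "s \<le> t" "t \<le> 1"
    and K: "\<And>\<tau>. \<tau> \<in> {s..t} \<Longrightarrow> f (\<gamma> \<tau>) \<noteq> 0 \<Longrightarrow> \<gamma> \<tau> \<in> {lo..hi}"
    and Dv: "\<And>a b i. s \<le> a \<Longrightarrow> a \<le> b \<Longrightarrow> b \<le> t \<Longrightarrow> \<gamma> a \<in> {lo..hi} \<Longrightarrow> \<gamma> b \<in> {lo..hi}
               \<Longrightarrow> (\<gamma> b - \<gamma> a) $ i \<le> Dv $ i"
    and Dv0: "\<And>i. 0 \<le> Dv $ i" and e: "0 < e"
  shows "integral {s..t} (integ f \<gamma>) \<le> root CARD('n) B * root CARD('n) (\<Prod>i\<in>UNIV. Dv $ i + e)"
proof -
  have B0: "0 \<le> B" using assms(3,4) order_trans by blast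
  have RHS0: "0 \<le> root CARD('n) B * root CARD('n) (\<Prod>i\<in>UNIV. Dv $ i + e)"
    using B0 Dv0 e by (simp add: prod_nonneg add_nonneg_pos less_imp_le)
  define T where "T = {s..t} \<inter> \<gamma> -` {lo..hi}"
  show ?thesis
  proof (cases "T = {}")
    case True
    have "integral {s..t} (integ f \<gamma>) = 0"
      by (rule integral_zero_but_end[of _ _ s], rule integ_zero) (use True K in \<open>auto simp: T_def\<close>)
    then show ?thesis using RHS0 by simp
  next
    case False
    have cont: "continuous_on {s..t} \<gamma>"
      using dv_cont[OF assms(1)] by (rule continuous_on_subset) (use assms in auto)
    have clT: "closed T" unfolding T_def
      by (rule continuous_closed_preimage[OF cont]) auto
    have bT: "bdd_below T" "bdd_above T" unfolding T_def by auto
    define a where "a = Inf T"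
    define b where "b = Sup T"
    have aT: "a \<in> T" unfolding a_def using closed_contains_Inf[OF False bT(1) clT] .
    have bT': "b \<in> T" unfolding b_def using closed_contains_Sup[OF False bT(2) clT] .
    have ab: "a \<le> b" using aT bT' bT unfolding a_def b_def by (meson cInf_lower cSup_upper order_trans)
    have Ta: "\<tau> \<in> T \<Longrightarrow> a \<le> \<tau>" for \<tau> unfolding a_def using bT by (meson cInf_lower)
    have Tb: "\<tau> \<in> T \<Longrightarrow> \<tau> \<le> b" for \<tau> unfolding b_def using bT by (meson cSup_upper)
    have sa: "s \<le> a" "a \<le> t" "s \<le> b" "b \<le> t" using aT bT' by (auto simp: T_def)
    have int: "integ f \<gamma> integrable_on {s..t}"
      by (rule integ_integrable_sub[OF assms(1-4)]) (use assms in auto)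
    have z1: "integral {s..a} (integ f \<gamma>) = 0"
    proof (rule integral_zero_but_end[of _ _ a], rule integ_zero)
      fix \<tau> assume "\<tau> \<in> {s..a}" "\<tau> \<noteq> a"
      then have "\<tau> \<notin> T" using Ta by force
      then show "f (\<gamma> \<tau>) = 0" using K[of \<tau>] \<open>\<tau> \<in> {s..a}\<close> sa by (force simp: T_def)
    qed
    have z2: "integral {b..t} (integ f \<gamma>) = 0"
    proof (rule integral_zero_but_end[of _ _ b], rule integ_zero)
      fix \<tau> assume "\<tau> \<in> {b..t}" "\<tau> \<noteq> b"
      then have "\<tau> \<notin> T" using Tb by force
      then show "f (\<gamma> \<tau>) = 0" using K[of \<tau>] \<open>\<tau> \<in> {b..t}\<close> sa by (force simp: T_def)
    qed
    have "integral {s..t} (integ f \<gamma>) = integral {s..a} (integ f \<gamma>) + integral {a..t} (integ f \<gamma>)"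
      using Henstock_Kurzweil_Integration.integral_combine[OF sa(1,2) int] by simp
    also have "integral {a..t} (integ f \<gamma>) = integral {a..b} (integ f \<gamma>) + integral {b..t} (integ f \<gamma>)"
      using Henstock_Kurzweil_Integration.integral_combine[OF ab sa(4) integrable_subinterval_real[OF int]] sa by simp
    finally have eq: "integral {s..t} (integ f \<gamma>) = integral {a..b} (integ f \<gamma>)" using z1 z2 by simp
    have "integral {a..b} (integ f \<gamma>) \<le> root CARD('n) B * root CARD('n) (\<Prod>i\<in>UNIV. (\<gamma> b - \<gamma> a) $ i + e)"
      by (rule integ_bound[OF assms(1-4) _ ab _ _ e]) (use sa assms in auto)
    also have "\<dots> \<le> root CARD('n) B * root CARD('n) (\<Prod>i\<in>UNIV. Dv $ i + e)"
    proof (rule mult_left_mono)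
      have "(\<Prod>i\<in>UNIV. (\<gamma> b - \<gamma> a) $ i + e) \<le> (\<Prod>i\<in>UNIV. Dv $ i + e)"
      proof (rule prod_mono)
        fix i
        have "0 \<le> (\<gamma> b - \<gamma> a) $ i" using dv_mono[OF assms(1), of a b i] sa ab assms by simp
        moreover have "(\<gamma> b - \<gamma> a) $ i \<le> Dv $ i"
          using Dv[OF sa(1) ab sa(4)] aT bT' by (auto simp: T_def)
        ultimately show "0 \<le> (\<gamma> b - \<gamma> a) $ i + e \<and> (\<gamma> b - \<gamma> a) $ i + e \<le> Dv $ i + e"
          using e by simp
      qed
      then show "root CARD('n) (\<Prod>i\<in>UNIV. (\<gamma> b - \<gamma> a) $ i + e) \<le> root CARD('n) (\<Prod>i\<in>UNIV. Dv $ i + e)"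
        by simp
    qed (use B0 in simp)
    finally show ?thesis using eq by simp
  qed
qed

lemma dv_restrict:
  fixes \<gamma> :: "real \<Rightarrow> real^'n"
  assumes "dv \<gamma> g" "0 < s" "s \<le> 1"
  shows "dv (\<lambda>t. \<gamma> (s * t)) (\<lambda>t. s *\<^sub>R g (s * t))"
  unfolding dv_def
proof (rule conjI)
  have "continuous_on {0..1} (g \<circ> (\<lambda>t. s * t))"
    by (rule continuous_on_compose) (auto intro!: continuous_intros continuous_on_subset[OF assms(1)[unfolded dv_def, THEN conjunct1]] simp: image_def assms mult_le_one less_imp_le)
  then show "continuous_on {0..1} (\<lambda>t. s *\<^sub>R g (s * t))"
    by (auto intro!: continuous_intros simp: o_def)
  show "\<forall>t\<in>{0..1}. ((\<lambda>t. \<gamma> (s * t)) has_vector_derivative s *\<^sub>R g (s * t)) (at t within {0..1}) \<and>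
        (\<forall>i. 0 \<le> (s *\<^sub>R g (s * t)) $ i) \<and> s *\<^sub>R g (s * t) \<noteq> 0"
  proof
  fix t :: real assume t: "t \<in> {0..1}"
  have st: "s * t \<in> {0..1}" using t assms by (auto simp: mult_le_one)
  have img: "(\<lambda>t. s * t) ` {0..1} \<subseteq> {0..1}" using assms by (auto simp: mult_le_one)
  have d1: "((\<lambda>t. s * t) has_vector_derivative s) (at t within {0..1})"
    by (auto intro!: derivative_eq_intros simp: has_real_derivative_iff_has_vector_derivative[symmetric])
  have d2: "(\<gamma> has_vector_derivative g (s * t)) (at (s * t) within (\<lambda>t. s * t) ` {0..1})"
    using assms(1) st unfolding dv_def
    by (meson has_vector_derivative_within_subset img)
  show "((\<lambda>t. \<gamma> (s * t)) has_vector_derivative s *\<^sub>R g (s * t)) (at t within {0..1}) \<and>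
        (\<forall>i. 0 \<le> (s *\<^sub>R g (s * t)) $ i) \<and> s *\<^sub>R g (s * t) \<noteq> 0"
    using vector_diff_chain_within[OF d1 d2] assms st unfolding dv_def by (auto simp: o_def)
  qed
qed

lemma J_restrict:
  fixes f :: "real^'n \<Rightarrow> real" and \<gamma> :: "real \<Rightarrow> real^'n"
  assumes "dv \<gamma> g" "f \<in> borel_measurable borel" "\<And>x. 0 \<le> f x" "\<And>x. f x \<le> B" "0 < s" "s \<le> 1"
  shows "Jfun f (\<lambda>t. \<gamma> (s * t)) = integral {0..s} (integ f \<gamma>)"
proof -
  have dvs: "dv (\<lambda>t. \<gamma> (s * t)) (\<lambda>t. s *\<^sub>R g (s * t))" by (rule dv_restrict[OF assms(1,5,6)])
  have eq: "integ f (\<lambda>t. \<gamma> (s * t)) t = s * integ f \<gamma> (s * t)" if t: "t \<in> {0..1}" for t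
  proof -
    have st: "s * t \<in> {0..1}" using t assms by (auto simp: mult_le_one)
    have "(\<Prod>i\<in>UNIV. (s *\<^sub>R g (s * t)) $ i) = s ^ CARD('n) * (\<Prod>i\<in>UNIV. g (s * t) $ i)"
      by (simp add: prod.distrib)
    then have "root CARD('n) (\<Prod>i\<in>UNIV. (s *\<^sub>R g (s * t)) $ i) = s * root CARD('n) (\<Prod>i\<in>UNIV. g (s * t) $ i)"
      using assms(5) by (simp add: real_root_mult real_root_power_cancel less_imp_le)
    then show ?thesis
      using dv_integ[OF dvs t, of f] dv_integ[OF assms(1) st, of f] by simp
  qed
  have int: "(integ f \<gamma> has_integral integral {0..s} (integ f \<gamma>)) (cbox 0 s)"
    using integ_integrable_sub[OF assms(1-4), of 0 s] assms by auto
  have "((\<lambda>t. integ f \<gamma> (s *\<^sub>R t + 0)) has_integral integral {0..s} (integ f \<gamma>) /\<^sub>R s ^ DIM(real))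
          (cbox ((0 - 0) /\<^sub>R s) ((s - 0) /\<^sub>R s))"
    by (rule has_integral_affinity'[OF int assms(5)])
  then have "((\<lambda>t. integ f \<gamma> (s * t)) has_integral integral {0..s} (integ f \<gamma>) / s) {0..1}"
    using assms(5) by (simp add: divide_inverse mult.commute)
  then have "((\<lambda>t. s * integ f \<gamma> (s * t)) has_integral s * (integral {0..s} (integ f \<gamma>) / s)) {0..1}"
    by (rule has_integral_mult_right)
  then have "((\<lambda>t. s * integ f \<gamma> (s * t)) has_integral integral {0..s} (integ f \<gamma>)) {0..1}"
    using assms(5) by simp
  then have "(integ f (\<lambda>t. \<gamma> (s * t)) has_integral integral {0..s} (integ f \<gamma>)) {0..1}"
    by (rule has_integral_eq[rotated]) (use eq in auto)
  then show ?thesis unfolding Jfun_integ by (rule integral_unique)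
qed




locale setting =
  fixes f :: "real^'n \<Rightarrow> real" and B :: real
  assumes meas: "f \<in> borel_measurable borel" and nonneg: "\<And>x. 0 \<le> f x"
    and bnd: "\<And>x. f x \<le> B" and supp: "\<And>x. f x \<noteq> 0 \<Longrightarrow> x \<in> {0..1}"
begin

lemma B0: "0 \<le> B" using nonneg[of 0] bnd[of 0] by simp

lemma J_nonneg: "dv \<gamma> g \<Longrightarrow> 0 \<le> Jfun f \<gamma>"
  unfolding Jfun_integ
  by (rule integral_nonneg[OF integ_integrable[OF _ meas nonneg bnd]]) (auto intro: integ_nonneg nonneg)

lemma J_bound: "dv \<gamma> g \<Longrightarrow> Jfun f \<gamma> \<le> 2 * root CARD('n) B"
proof -
  assume dvg: "dv \<gamma> g"
  have "integral {0..1} (integ f \<gamma>) \<le> root CARD('n) B * root CARD('n) (\<Prod>i\<in>UNIV. (1::real^'n) $ i + 1)"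
    by (rule integ_bound_box[OF dvg meas nonneg bnd, where lo=0 and hi=1])
       (use supp in \<open>auto simp: less_eq_vec_def\<close>, smt (verit))
  also have "(\<Prod>i\<in>UNIV. (1::real^'n) $ i + 1) = 2 ^ CARD('n)" by simp
  finally show ?thesis unfolding Jfun_integ by (simp add: real_root_power_cancel mult.commute)
qed

lemma line_dv: "dv (\<lambda>t. x - (1 - t) *\<^sub>R (1::real^'n)) (\<lambda>t. 1)"
  unfolding dv_def
  by (auto intro!: derivative_eq_intros simp: has_real_derivative_iff_has_vector_derivative[symmetric])

definition SS :: "real^'n \<Rightarrow> real set" where
  "SS x = {Jfun f \<gamma> | \<gamma>. admissible \<gamma> \<and> \<gamma> 1 \<le> x}"

lemma U_def': "Ufun f x = Sup (SS x)" unfolding Ufun_def SS_def ..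

lemma SS_ne: "SS x \<noteq> {}"
proof -
  have "admissible (\<lambda>t. x - (1 - t) *\<^sub>R (1::real^'n))" using line_dv admissible_dv by blast
  then show ?thesis unfolding SS_def by force
qed

lemma SS_bdd: "bdd_above (SS x)"
  unfolding SS_def bdd_above_def using J_bound admissible_dv by blast

lemma J_le_U: "admissible \<gamma> \<Longrightarrow> \<gamma> 1 \<le> x \<Longrightarrow> Jfun f \<gamma> \<le> Ufun f x"
  unfolding U_def' by (rule cSup_upper[OF _ SS_bdd]) (auto simp: SS_def)

lemma U_nonneg: "0 \<le> Ufun f x"
proof -
  have "admissible (\<lambda>t. x - (1 - t) *\<^sub>R (1::real^'n))" using line_dv admissible_dv by blast
  then show ?thesis using J_le_U[of "\<lambda>t. x - (1 - t) *\<^sub>R (1::real^'n)" x] J_nonneg[OF line_dv, of x] by force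
qed

lemma U_near: "0 < \<epsilon> \<Longrightarrow> \<exists>\<gamma> g. dv \<gamma> g \<and> \<gamma> 1 \<le> x \<and> Ufun f x - \<epsilon> < Jfun f \<gamma>"
proof -
  assume e: "0 < \<epsilon>"
  have "Ufun f x - \<epsilon> < Sup (SS x)" using e U_def' by simp
  then obtain y where "y \<in> SS x" "Ufun f x - \<epsilon> < y" using less_cSup_iff[OF SS_ne SS_bdd] by blast
  then show ?thesis unfolding SS_def admissible_dv by blast
qed

lemma U_le: "(\<And>\<gamma> g. dv \<gamma> g \<Longrightarrow> \<gamma> 1 \<le> x \<Longrightarrow> Jfun f \<gamma> \<le> c) \<Longrightarrow> Ufun f x \<le> c"
  unfolding U_def' by (rule cSup_least[OF SS_ne]) (auto simp: SS_def admissible_dv)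

lemma U_mono: "x \<le> y \<Longrightarrow> Ufun f x \<le> Ufun f y"
  by (rule U_le) (meson J_le_U admissible_dv order_trans)

end




lemma small_root_le0:
  fixes a C :: real
  assumes n: "0 < n" and C: "0 \<le> C" and h: "\<And>e. 0 < e \<Longrightarrow> e \<le> 1 \<Longrightarrow> a \<le> C * root n e"
  shows "a \<le> 0"
proof (rule ccontr)
  assume "\<not> a \<le> 0" then have a: "0 < a" by simp
  define e where "e = min 1 ((a / (2 * C + 1)) ^ n)"
  have e0: "0 < e" using a C by (simp add: e_def)
  have "root n e \<le> root n ((a / (2 * C + 1)) ^ n)" using n by (simp add: e_def)
  also have "\<dots> = a / (2 * C + 1)" using a C n by (simp add: real_root_power_cancel)
  finally have "C * root n e \<le> C * (a / (2 * C + 1))" by (rule mult_left_mono) (use C in auto)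
  also have "\<dots> < a" using a C by (simp add: field_simps add_pos_nonneg)
  finally show False using h[OF e0] by (simp add: e_def)
qed

context setting begin

lemma U_zero:
  assumes "x $ i \<le> 0" shows "Ufun f x = 0"
proof -
  have "Ufun f x \<le> 0"
  proof (rule U_le)
    fix \<gamma> g assume dvg: "dv \<gamma> g" and g1: "\<gamma> 1 \<le> x"
    show "Jfun f \<gamma> \<le> 0"
    proof (rule small_root_le0[of "CARD('n)" "root CARD('n) B * root CARD('n) (2 ^ CARD('n))"])
      show "0 \<le> root CARD('n) B * root CARD('n) (2 ^ CARD('n))" using B0 by simp
      fix e :: real assume e: "0 < e" "e \<le> 1"
      define Dv :: "real^'n" where "Dv = (\<chi> j. if j = i then 0 else 1)"
      have "integral {0..1} (integ f \<gamma>) \<le> root CARD('n) B * root CARD('n) (\<Prod>j\<in>UNIV. Dv $ j + e)"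
      proof (rule integ_bound_box[OF dvg meas nonneg bnd, where lo=0 and hi=1])
        fix a b j assume ab: "0 \<le> a" "a \<le> b" "b \<le> 1" "\<gamma> a \<in> {0..1}" "\<gamma> b \<in> {0..1}"
        have "\<gamma> b $ i \<le> \<gamma> 1 $ i" using dv_mono[OF dvg, of b 1 i] ab by simp
        also have "\<dots> \<le> x $ i" using g1 by (simp add: less_eq_vec_def)
        finally have "\<gamma> b $ i \<le> 0" using assms by simp
        moreover have "0 \<le> \<gamma> a $ i" "\<gamma> b $ j \<le> 1" "0 \<le> \<gamma> a $ j"
          using ab(4,5) by (auto simp: less_eq_vec_def)
        ultimately show "(\<gamma> b - \<gamma> a) $ j \<le> Dv $ j" by (auto simp: Dv_def)
      qed (use supp e in \<open>auto simp: Dv_def\<close>)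
      also have "(\<Prod>j\<in>UNIV. Dv $ j + e) \<le> (\<Prod>j\<in>(UNIV::'n set). if j = i then e * 2 else 2)"
        by (rule prod_mono) (use e in \<open>auto simp: Dv_def\<close>)
      also have "(\<Prod>j\<in>(UNIV::'n set). if j = i then e * 2 else 2) = e * 2 ^ CARD('n)"
      proof -
        have "(\<Prod>j\<in>(UNIV::'n set). if j = i then e * 2 else 2) = (\<Prod>j\<in>(UNIV::'n set). (if j = i then e else 1) * 2)"
          by (rule prod.cong) auto
        also have "\<dots> = e * 2 ^ CARD('n)" by (simp add: prod.distrib prod.delta)
        finally show ?thesis .
      qed
      finally have "Jfun f \<gamma> \<le> root CARD('n) B * root CARD('n) (e * 2 ^ CARD('n))"
        unfolding Jfun_integ using B0 e by (simp add: mult_left_mono)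
      also have "\<dots> = root CARD('n) B * root CARD('n) (2 ^ CARD('n)) * root CARD('n) e"
        using e by (simp add: real_root_mult)
      finally show "Jfun f \<gamma> \<le> root CARD('n) B * root CARD('n) (2 ^ CARD('n)) * root CARD('n) e" .
    qed simp
  qed
  then show ?thesis using U_nonneg[of x] by simp
qed

lemma J_split:
  assumes "dv \<gamma> g" "0 < s" "s \<le> 1"
  shows "Jfun f \<gamma> = Jfun f (\<lambda>t. \<gamma> (s * t)) + integral {s..1} (integ f \<gamma>)"
proof -
  have "Jfun f \<gamma> = integral {0..s} (integ f \<gamma>) + integral {s..1} (integ f \<gamma>)"
    unfolding Jfun_integ
    by (rule Henstock_Kurzweil_Integration.integral_combine[symmetric])
       (use assms integ_integrable[OF assms(1) meas nonneg bnd] in auto)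
  then show ?thesis using J_restrict[OF assms(1) meas nonneg bnd assms(2,3)] by simp
qed

lemma U_ge_restrict:
  assumes "dv \<gamma> g" "0 < s" "s \<le> 1" "\<gamma> s \<le> y"
  shows "Jfun f (\<lambda>t. \<gamma> (s * t)) \<le> Ufun f y"
  by (rule J_le_U) (use dv_restrict[OF assms(1-3)] assms(4) admissible_dv in auto)

lemma U_trunc:
  assumes z: "\<And>y. f y \<noteq> 0 \<Longrightarrow> y \<le> z"
  shows "Ufun f x = Ufun f (\<chi> i. min (x$i) (z$i))"
proof (rule antisym)
  define m :: "real^'n" where "m = (\<chi> i. min (x$i) (z$i))"
  show "Ufun f m \<le> Ufun f x" by (rule U_mono) (simp add: m_def less_eq_vec_def)
  show "Ufun f x \<le> Ufun f m"
  proof (rule U_le)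
    fix \<gamma> g assume dvg: "dv \<gamma> g" and g1: "\<gamma> 1 \<le> x"
    define T where "T = {0..1} \<inter> \<gamma> -` {..z}"
    show "Jfun f \<gamma> \<le> Ufun f m"
    proof (cases "T = {}")
      case True
      have "Jfun f \<gamma> = 0" unfolding Jfun_integ
        by (rule integral_zero_but_end[of _ _ 0], rule integ_zero) (use True z in \<open>auto simp: T_def\<close>)
      then show ?thesis using U_nonneg by simp
    next
      case False
      have clT: "closed T" unfolding T_def
        by (rule continuous_closed_preimage[OF dv_cont[OF dvg]]) auto
      have bT: "bdd_above T" unfolding T_def by auto
      define s where "s = Sup T"
      have sT: "s \<in> T" unfolding s_def using closed_contains_Sup[OF False bT clT] .
      have Ts: "\<tau> \<in> T \<Longrightarrow> \<tau> \<le> s" for \<tau> unfolding s_def using bT by (meson cSup_upper)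
      have s01: "0 \<le> s" "s \<le> 1" using sT by (auto simp: T_def)
      have gs: "\<gamma> s \<le> m"
      proof -
        have "\<gamma> s \<le> z" using sT by (auto simp: T_def)
        moreover have "\<gamma> s \<le> x" using dv_mono_vec[OF dvg s01(1) s01(2)] g1 by simp
        ultimately show ?thesis by (simp add: m_def less_eq_vec_def)
      qed
      have z2: "integral {s..1} (integ f \<gamma>) = 0"
      proof (rule integral_zero_but_end[of _ _ s], rule integ_zero)
        fix \<tau> assume "\<tau> \<in> {s..1}" "\<tau> \<noteq> s"
        then have "\<tau> \<notin> T" using Ts by force
        then show "f (\<gamma> \<tau>) = 0" using z[of "\<gamma> \<tau>"] \<open>\<tau> \<in> {s..1}\<close> s01 by (force simp: T_def)
      qed
      show ?thesis
      proof (cases "s = 0")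
        case True
        then have "Jfun f \<gamma> = 0" using z2 by (simp add: Jfun_integ)
        then show ?thesis using U_nonneg by simp
      next
        case False
        then have "0 < s" using s01 by simp
        then show ?thesis using J_split[OF dvg _ s01(2)] z2 U_ge_restrict[OF dvg _ s01(2) gs] by simp
      qed
    qed
  qed
qed

end



context setting begin

lemma box_bound_coord:
  assumes dvg: "dv \<gamma> g" and s: "0 \<le> s" "s \<le> 1" and h: "0 < h" and h1: "h \<le> 1" and d: "\<gamma> 1 $ i - \<gamma> s $ i \<le> h"
  shows "integral {s..1} (integ f \<gamma>) \<le> root CARD('n) B * root CARD('n) (2 ^ CARD('n)) * root CARD('n) h"
proof -
  define Dv :: "real^'n" where "Dv = (\<chi> j. if j = i then h else 1)"
  have "integral {s..1} (integ f \<gamma>) \<le> root CARD('n) B * root CARD('n) (\<Prod>j\<in>UNIV. Dv $ j + h)"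
  proof (rule integ_bound_box[OF dvg meas nonneg bnd s(1) s(2) order_refl, where lo=0 and hi=1])
    fix a b j assume ab: "s \<le> a" "a \<le> b" "b \<le> 1" "\<gamma> a \<in> {0..1}" "\<gamma> b \<in> {0..1}"
    have "\<gamma> b $ i \<le> \<gamma> 1 $ i" using dv_mono[OF dvg, of b 1 i] ab s by simp
    moreover have "\<gamma> s $ i \<le> \<gamma> a $ i" using dv_mono[OF dvg, of s a i] ab s by simp
    moreover have "\<gamma> b $ j \<le> 1" "0 \<le> \<gamma> a $ j"
      using ab(4,5) by (auto simp: less_eq_vec_def)
    ultimately show "(\<gamma> b - \<gamma> a) $ j \<le> Dv $ j" using d by (auto simp: Dv_def)
  qed (use supp h in \<open>auto simp: Dv_def\<close>)
  moreover have "(\<Prod>j\<in>UNIV. Dv $ j + h) \<le> (\<Prod>j\<in>(UNIV::'n set). if j = i then h * 2 else 2)"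
    by (rule prod_mono) (use h h1 in \<open>auto simp: Dv_def\<close>)
  moreover have "(\<Prod>j\<in>(UNIV::'n set). if j = i then h * 2 else 2) = h * 2 ^ CARD('n)"
  proof -
    have "(\<Prod>j\<in>(UNIV::'n set). if j = i then h * 2 else 2) = (\<Prod>j\<in>(UNIV::'n set). (if j = i then h else 1) * 2)"
      by (rule prod.cong) auto
    also have "\<dots> = h * 2 ^ CARD('n)" by (simp add: prod.distrib prod.delta)
    finally show ?thesis .
  qed
  ultimately have "integral {s..1} (integ f \<gamma>) \<le> root CARD('n) B * root CARD('n) (h * 2 ^ CARD('n))"
    by (smt (verit, best) B0 mult_left_mono real_root_ge_zero real_root_le_iff zero_less_card_finite)
  then show ?thesis using B0 h by (simp add: real_root_mult mult_ac)
qed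

lemma U_coord:
  assumes h: "0 < h" and h1: "h \<le> 1"
  shows "Ufun f x \<le> Ufun f (x - h *\<^sub>R axis i 1) + root CARD('n) B * root CARD('n) (2 ^ CARD('n)) * root CARD('n) h"
    (is "_ \<le> Ufun f ?y + ?Q")
proof (rule U_le)
  have Q0: "0 \<le> ?Q" using B0 h by simp
  have yi: "?y $ i = x $ i - h" by (simp add: axis_def)
  have yj: "j \<noteq> i \<Longrightarrow> ?y $ j = x $ j" for j by (simp add: axis_def)
  fix \<gamma> g assume dvg: "dv \<gamma> g" and g1: "\<gamma> 1 \<le> x"
  have le_y: "\<gamma> s \<le> ?y" if "\<gamma> s $ i \<le> x $ i - h" "\<gamma> s \<le> x" for s
    using that yi yj unfolding less_eq_vec_def by (metis)
  consider "\<gamma> 1 $ i \<le> x $ i - h" | "x $ i - h \<le> \<gamma> 0 $ i" | "\<gamma> 0 $ i < x $ i - h" "x $ i - h < \<gamma> 1 $ i"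
    by linarith
  then show "Jfun f \<gamma> \<le> Ufun f ?y + ?Q"
  proof cases
    case 1
    then have "Jfun f \<gamma> \<le> Ufun f ?y" using J_le_U le_y[OF 1 g1] dvg admissible_dv by blast
    then show ?thesis using Q0 by simp
  next
    case 2
    have d: "\<gamma> 1 $ i - \<gamma> 0 $ i \<le> h" using 2 g1 by (simp add: less_eq_vec_def) (smt (verit) g1 less_eq_vec_def)
    have "Jfun f \<gamma> \<le> ?Q" unfolding Jfun_integ by (rule box_bound_coord[OF dvg _ _ h h1 d]) auto
    then show ?thesis using U_nonneg[of ?y] by simp
  next
    case 3
    have "\<exists>s. 0 \<le> s \<and> s \<le> 1 \<and> \<gamma> s $ i = x $ i - h"
      by (rule IVT') (use 3 continuous_on_component[OF dv_cont[OF dvg]] in auto)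
    then obtain s where s: "0 \<le> s" "s \<le> 1" "\<gamma> s $ i = x $ i - h" by blast
    have s0: "0 < s" using s 3 by (cases "s = 0") auto
    have gs: "\<gamma> s \<le> ?y" by (rule le_y) (use s dv_mono_vec[OF dvg s(1,2)] g1 in auto)
    have "integral {s..1} (integ f \<gamma>) \<le> ?Q"
      by (rule box_bound_coord[OF dvg s(1,2) h h1, where i=i]) (use s g1 in \<open>auto simp: less_eq_vec_def\<close>)
    then show ?thesis using J_split[OF dvg s0 s(2)] U_ge_restrict[OF dvg s0 s(2) gs] by simp
  qed
qed

lemma U_diag_aux:
  assumes h: "0 < h" "h \<le> 1" and F: "finite F"
  shows "Ufun f x \<le> Ufun f (x - h *\<^sub>R (\<Sum>i\<in>F. axis i 1)) + card F * (root CARD('n) B * root CARD('n) (2 ^ CARD('n)) * root CARD('n) h)"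
  using F
proof (induction F arbitrary: x rule: finite_induct)
  case empty then show ?case by simp
next
  case (insert i F)
  let ?Q = "root CARD('n) B * root CARD('n) (2 ^ CARD('n)) * root CARD('n) h"
  have "Ufun f x \<le> Ufun f (x - h *\<^sub>R (\<Sum>i\<in>F. axis i 1)) + card F * ?Q" by (rule insert.IH)
  also have "Ufun f (x - h *\<^sub>R (\<Sum>i\<in>F. axis i 1)) \<le> Ufun f (x - h *\<^sub>R (\<Sum>i\<in>F. axis i 1) - h *\<^sub>R axis i 1) + ?Q"
    by (rule U_coord[OF h])
  also have "x - h *\<^sub>R (\<Sum>i\<in>F. axis i 1) - h *\<^sub>R axis i 1 = x - h *\<^sub>R (\<Sum>i\<in>insert i F. axis i 1)"
    using insert by (simp add: algebra_simps)
  finally show ?case using insert by (simp add: algebra_simps)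
qed

lemma sum_axis_one: "(\<Sum>i\<in>UNIV. axis i (1::real)) = (1::real^'n)"
  by (simp add: vec_eq_iff sum_component axis_def)

lemma U_diag:
  assumes h: "0 < h" "h \<le> 1"
  shows "Ufun f x \<le> Ufun f (x - h *\<^sub>R 1) + CARD('n) * (root CARD('n) B * root CARD('n) (2 ^ CARD('n)) * root CARD('n) h)"
  using U_diag_aux[OF h, of UNIV x] by (simp add: sum_axis_one)

lemma U_cont: "continuous_on UNIV (Ufun f)"
proof -
  define K where "K = CARD('n) * (root CARD('n) B * root CARD('n) (2 ^ CARD('n)))"
  have K0: "0 \<le> K" using B0 by (simp add: K_def)
  have diag: "Ufun f x \<le> Ufun f (x - h *\<^sub>R 1) + K * root CARD('n) h" if "0 < h" "h \<le> 1" for x h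
    using U_diag[OF that, of x] by (simp add: K_def mult.assoc)
  show ?thesis
  unfolding continuous_on_iff
  proof (intro ballI allI impI)
    fix x :: "real^'n" and \<epsilon> :: real assume e: "0 < \<epsilon>"
    define h where "h = min 1 ((\<epsilon> / (K + 1)) ^ CARD('n))"
    have h0: "0 < h" "h \<le> 1" using e K0 by (auto simp: h_def)
    have "root CARD('n) h \<le> root CARD('n) ((\<epsilon> / (K + 1)) ^ CARD('n))" by (simp add: h_def)
    also have "\<dots> = \<epsilon> / (K + 1)" using e K0 by (simp add: real_root_power_cancel)
    finally have "K * root CARD('n) h \<le> K * (\<epsilon> / (K + 1))" by (rule mult_left_mono) (use K0 in auto)
    also have "\<dots> < \<epsilon>" using e K0 by (simp add: field_simps)
    finally have Kh: "K * root CARD('n) h < \<epsilon>" .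
    show "\<exists>\<delta>>0. \<forall>y\<in>UNIV. dist y x < \<delta> \<longrightarrow> dist (Ufun f y) (Ufun f x) < \<epsilon>"
    proof (intro exI conjI ballI impI)
      show "0 < h" by fact
      fix y assume "dist y x < h"
      then have c: "\<bar>y $ i - x $ i\<bar> < h" for i
        by (metis component_le_norm_cart dist_norm le_less_trans vector_minus_component)
      have l: "x - h *\<^sub>R 1 \<le> y" using c by (simp add: less_eq_vec_def abs_less_iff) (smt (verit) c)
      have u2: "y - h *\<^sub>R 1 \<le> x" using c by (simp add: less_eq_vec_def abs_less_iff) (smt (verit) c)
      have "Ufun f y \<le> Ufun f (y - h *\<^sub>R 1) + K * root CARD('n) h" by (rule diag[OF h0])
      also have "Ufun f (y - h *\<^sub>R 1) \<le> Ufun f x" by (rule U_mono[OF u2])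
      finally have A: "Ufun f y \<le> Ufun f x + K * root CARD('n) h" by simp
      have "Ufun f x \<le> Ufun f (x - h *\<^sub>R 1) + K * root CARD('n) h" by (rule diag[OF h0])
      also have "Ufun f (x - h *\<^sub>R 1) \<le> Ufun f y" by (rule U_mono[OF l])
      finally have B: "Ufun f x \<le> Ufun f y + K * root CARD('n) h" by simp
      show "dist (Ufun f y) (Ufun f x) < \<epsilon>" using A B Kh by (simp add: dist_real_def abs_le_iff)
    qed
  qed
qed

end



lemma usc_lt:
  fixes g :: "real^'n \<Rightarrow> real"
  assumes M: "\<And>y. \<bar>g y\<bar> \<le> M" and c: "usc_env g x < c"
  shows "\<exists>r>0. \<forall>y\<in>cball x r. g y < c"
proof -
  have bdd: "bdd_above (g ` cball x r)" for r using M by (auto simp: bdd_above_def abs_le_iff intro!: exI[of _ M])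
  have ge: "g x \<le> Sup (g ` cball x r)" if "0 < r" for r
    by (rule cSup_upper[OF _ bdd]) (use that in auto)
  have bb: "bdd_below ((\<lambda>r. Sup (g ` cball x r)) ` {0<..})"
    unfolding bdd_below_def using ge by (auto intro!: exI[of _ "g x"])
  have "Inf ((\<lambda>r. Sup (g ` cball x r)) ` {0<..}) < c" using c by (simp add: usc_env_def)
  then obtain r where r: "0 < r" "Sup (g ` cball x r) < c"
    using cInf_less_iff[OF _ bb] by auto
  have "\<forall>y\<in>cball x r. g y < c"
    using r cSup_upper[OF _ bdd] by (meson image_eqI le_less_trans)
  then show ?thesis using r by blast
qed

lemma usc_ge:
  fixes g :: "real^'n \<Rightarrow> real"
  assumes M: "\<And>y. \<bar>g y\<bar> \<le> M"
  shows "g x \<le> usc_env g x"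
proof -
  have bdd: "bdd_above (g ` cball x r)" for r using M by (auto simp: bdd_above_def abs_le_iff intro!: exI[of _ M])
  have ge: "g x \<le> Sup (g ` cball x r)" if "0 < r" for r
    by (rule cSup_upper[OF _ bdd]) (use that in auto)
  show ?thesis unfolding usc_env_def
    by (rule cInf_greatest) (use ge in auto)
qed

lemma lsc_gt:
  fixes g :: "real^'n \<Rightarrow> real"
  assumes M: "\<And>y. \<bar>g y\<bar> \<le> M" and c: "c < lsc_env g x"
  shows "\<exists>r>0. \<forall>y\<in>cball x r. c < g y"
proof -
  have "usc_env (\<lambda>y. - g y) x < - c" using c by (simp add: lsc_env_def)
  from usc_lt[OF _ this] M obtain r where "0 < r" "\<forall>y\<in>cball x r. - g y < - c" by force
  then show ?thesis by auto
qed

lemma lsc_le: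
  fixes g :: "real^'n \<Rightarrow> real"
  assumes M: "\<And>y. \<bar>g y\<bar> \<le> M"
  shows "lsc_env g x \<le> g x"
  using usc_ge[of "\<lambda>y. - g y" M x] M by (simp add: lsc_env_def)

lemma norm_axis_scale: "norm (t *\<^sub>R axis i (1::real)) = \<bar>t\<bar>"
  by (simp add: norm_scaleR)

lemma inner_axis1: "inner p (axis i (1::real)) = p $ i"
  by (simp add: inner_axis)

context setting begin

lemma superdiff_nonneg:
  assumes p: "p \<in> superdiff (Ufun f) x" shows "0 \<le> p $ i"
proof (rule ccontr)
  assume "\<not> 0 \<le> p $ i" then have n: "p $ i < 0" by simp
  define \<epsilon> where "\<epsilon> = - p $ i / 2"
  have e: "0 < \<epsilon>" using n by (simp add: \<epsilon>_def)
  obtain \<delta> where d: "0 < \<delta>" "\<And>y. norm (y - x) < \<delta> \<Longrightarrow> Ufun f y \<le> Ufun f x + inner p (y - x) + \<epsilon> * norm (y - x)"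
    using p e unfolding superdiff_def by blast
  define t where "t = \<delta> / 2"
  have t: "0 < t" "t < \<delta>" using d by (auto simp: t_def)
  have "Ufun f x \<le> Ufun f (x + t *\<^sub>R axis i 1)" by (rule U_mono) (use t in \<open>simp add: less_eq_vec_def axis_def\<close>)
  also have "\<dots> \<le> Ufun f x + inner p (t *\<^sub>R axis i 1) + \<epsilon> * norm (t *\<^sub>R axis i (1::real))"
    using d(2)[of "x + t *\<^sub>R axis i 1"] t by (simp add: norm_axis_scale)
  finally have "0 \<le> t * p $ i + \<epsilon> * t" using t by (simp add: norm_axis_scale inner_axis1)
  then have "0 \<le> t * (p $ i + \<epsilon>)" by (simp add: algebra_simps)
  then have "0 \<le> p $ i + \<epsilon>" using t by (simp add: zero_le_mult_iff)
  then show False using n by (simp add: \<epsilon>_def)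
qed

lemma subdiff_nonneg:
  assumes p: "p \<in> subdiff (Ufun f) x" shows "0 \<le> p $ i"
proof (rule ccontr)
  assume "\<not> 0 \<le> p $ i" then have n: "p $ i < 0" by simp
  define \<epsilon> where "\<epsilon> = - p $ i / 2"
  have e: "0 < \<epsilon>" using n by (simp add: \<epsilon>_def)
  obtain \<delta> where d: "0 < \<delta>" "\<And>y. norm (y - x) < \<delta> \<Longrightarrow> Ufun f y \<ge> Ufun f x + inner p (y - x) - \<epsilon> * norm (y - x)"
    using p e unfolding subdiff_def by blast
  define t where "t = \<delta> / 2"
  have t: "0 < t" "t < \<delta>" using d by (auto simp: t_def)
  have "Ufun f x + inner p (- t *\<^sub>R axis i 1) - \<epsilon> * norm (- t *\<^sub>R axis i (1::real)) \<le> Ufun f (x - t *\<^sub>R axis i 1)"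
    using d(2)[of "x - t *\<^sub>R axis i 1"] t by (simp add: norm_axis_scale)
  also have "\<dots> \<le> Ufun f x" by (rule U_mono) (use t in \<open>simp add: less_eq_vec_def axis_def\<close>)
  finally have "- t * p $ i - \<epsilon> * t \<le> 0" using t by (simp add: norm_axis_scale inner_axis1)
  then have "0 \<le> t * (p $ i + \<epsilon>)" by (simp add: algebra_simps)
  then have "0 \<le> p $ i + \<epsilon>" using t by (simp add: zero_le_mult_iff)
  then show False using n by (simp add: \<epsilon>_def)
qed

end



lemma closure_le:
  fixes \<phi> :: "real \<Rightarrow> real"
  assumes c: "continuous_on {0..1} \<phi>" and s: "0 \<le> s" "s < 1" and h: "\<And>\<tau>. s < \<tau> \<Longrightarrow> \<tau> \<le> 1 \<Longrightarrow> b \<le> \<phi> \<tau>"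
  shows "b \<le> \<phi> s"
proof -
  have cl: "closed ({0..1} \<inter> \<phi> -` {b..})" by (rule continuous_closed_preimage[OF c]) auto
  have "{s<..1} \<subseteq> {0..1} \<inter> \<phi> -` {b..}" using h s by auto
  then have "closure {s<..1} \<subseteq> {0..1} \<inter> \<phi> -` {b..}" using cl closure_minimal by blast
  then show ?thesis using s by force
qed

lemma norm_box:
  fixes x y :: "real^'n" and k :: real
  assumes "\<And>i. x $ i - k \<le> y $ i" "\<And>i. y $ i \<le> x $ i"
  shows "norm (y - x) \<le> CARD('n) * k"
proof -
  have "norm (y - x) \<le> (\<Sum>i\<in>UNIV. \<bar>(y - x) $ i\<bar>)" by (rule norm_le_l1_cart)
  also have "\<dots> \<le> (\<Sum>i\<in>(UNIV::'n set). k)" by (rule sum_mono) (use assms in \<open>auto simp: abs_le_iff\<close>, smt (verit) assms)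
  finally show ?thesis by simp
qed

lemma inner_nonpos:
  fixes p v :: "real^'n"
  assumes "\<And>i. 0 \<le> p $ i" "\<And>i. v $ i \<le> 0"
  shows "inner p v \<le> 0"
  unfolding inner_vec_def by (rule sum_nonpos) (simp add: assms mult_nonneg_nonpos)

lemma inner_nonneg:
  fixes p v :: "real^'n"
  assumes "\<And>i. 0 \<le> p $ i" "\<And>i. 0 \<le> v $ i"
  shows "0 \<le> inner p v"
  unfolding inner_vec_def by (rule sum_nonneg) (simp add: assms)

lemma inner_ge_comp:
  fixes p v :: "real^'n"
  assumes "\<And>i. 0 \<le> p $ i" "\<And>i. 0 \<le> v $ i"
  shows "p $ j * v $ j \<le> inner p v"
proof -
  have "p $ j * v $ j \<le> (\<Sum>i\<in>UNIV. p $ i * v $ i)"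
    by (rule member_le_sum) (use assms in auto)
  then show ?thesis by (simp add: inner_vec_def)
qed

context setting begin

lemma J_le_Us:
  assumes "dv \<gamma> g" "0 \<le> s" "s \<le> 1"
  shows "Jfun f \<gamma> \<le> Ufun f (\<gamma> s) + integral {s..1} (integ f \<gamma>)"
proof (cases "s = 0")
  case True then show ?thesis using U_nonneg[of "\<gamma> s"] by (simp add: Jfun_integ)
next
  case False
  then have "0 < s" using assms by simp
  then show ?thesis using J_split[OF assms(1) _ assms(3)] U_ge_restrict[OF assms(1) _ assms(3) order_refl] by simp
qed

end



context setting begin

lemma subsol:
  assumes p: "p \<in> superdiff (Ufun f) x"
  shows "(\<Prod>i\<in>UNIV. p $ i) \<le> usc_env (\<lambda>y. f y / real CARD('n) ^ CARD('n)) x"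
proof -
  define G where "G = (\<lambda>y. f y / real CARD('n) ^ CARD('n))"
  have Gb: "\<bar>G y\<bar> \<le> B" for y
  proof -
    have k: "1 \<le> real CARD('n) ^ CARD('n)" by (simp add: one_le_power)
    have "G y \<le> f y" unfolding G_def using divide_left_mono[OF k nonneg[of y]] k by simp
    then show ?thesis using bnd[of y] nonneg[of y] by (simp add: G_def)
  qed
  define u where "u = usc_env G x"
  have "G x \<le> u" using usc_ge[of G B x] Gb by (simp add: u_def)
  moreover have "0 \<le> G x" using nonneg[of x] by (simp add: G_def)
  ultimately have u0: "0 \<le> u" by linarith
  have pnn: "0 \<le> p $ i" for i by (rule superdiff_nonneg[OF p])
  show ?thesis
  proof (cases "\<exists>i. p $ i = 0")
    case True
    then obtain i0 where "p $ i0 = 0" by blast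
    then have "(\<Prod>i\<in>UNIV. p $ i) = 0" by (intro prod_zero) auto
    then show ?thesis using u0 unfolding u_def G_def by linarith
  next
    case False
    then have ppos: "0 < p $ i" for i using pnn[of i] by (simp add: less_le)
    show ?thesis unfolding G_def[symmetric] u_def[symmetric]
    proof (rule ccontr)
      assume "\<not> (\<Prod>i\<in>UNIV. p $ i) \<le> u"
      then have lt: "u < (\<Prod>i\<in>UNIV. p $ i)" by simp
      define Pp where "Pp = (\<Prod>i\<in>UNIV. p $ i)"
      have Pp0: "0 < Pp" using ppos by (simp add: Pp_def prod_pos)
      define P where "P = root CARD('n) Pp"
      have P0: "0 < P" using Pp0 by (simp add: P_def)
      define dd where "dd = real CARD('n)"
      have dd1: "1 \<le> dd" by (simp add: dd_def)
      define c where "c = dd ^ CARD('n) * ((u + Pp) / 2)"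
      have c0: "0 \<le> c" using u0 Pp0 by (simp add: c_def dd_def)
      obtain r where r: "0 < r" "\<And>y. y \<in> cball x r \<Longrightarrow> G y < (u + Pp) / 2"
        using usc_lt[of G B x "(u + Pp) / 2"] Gb lt by (auto simp: u_def Pp_def)
      have fc: "f y \<le> c" if "y \<in> cball x r" for y
        using r(2)[OF that] by (simp add: G_def c_def dd_def field_simps)
      have "c < dd ^ CARD('n) * Pp" using lt by (simp add: c_def Pp_def dd_def)
      also have "\<dots> = (dd * P) ^ CARD('n)" using Pp0 by (simp add: P_def power_mult_distrib)
      finally have "root CARD('n) c < root CARD('n) ((dd * P) ^ CARD('n))" by simp
      also have "\<dots> = dd * P" using dd1 P0 by (simp add: real_root_power_cancel)
      finally have rc: "root CARD('n) c < dd * P" .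
      define \<theta> where "\<theta> = root CARD('n) c / (dd * P)"
      have th: "0 \<le> \<theta>" "\<theta> < 1" using rc dd1 P0 c0 by (auto simp: \<theta>_def divide_less_eq)
      define m where "m = Min (range (\<lambda>i. p $ i))"
      have m0: "0 < m" using ppos by (simp add: m_def)
      have pm: "m \<le> p $ i" for i by (simp add: m_def)
      define Sp where "Sp = (\<Sum>i\<in>UNIV. p $ i)"
      have Spm: "m \<le> Sp"
      proof -
        obtain i0 :: 'n where True by simp
        have "p $ i0 \<le> Sp" unfolding Sp_def by (rule member_le_sum) (use pnn in auto)
        then show ?thesis using pm[of i0] by simp
      qed
      have Sp0: "0 < Sp" using Spm m0 by simp
      define \<kappa> where "\<kappa> = (1 - \<theta>) * m / (16 * dd)"
      have k0: "0 < \<kappa>" using th m0 dd1 by (simp add: \<kappa>_def)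
      have k16: "16 * dd * \<kappa> = (1 - \<theta>) * m" using dd1 by (simp add: \<kappa>_def)
      obtain \<delta> where d: "0 < \<delta>" "\<And>y. norm (y - x) < \<delta> \<Longrightarrow> Ufun f y \<le> Ufun f x + inner p (y - x) + \<kappa> * norm (y - x)"
        using p k0 unfolding superdiff_def by blast
      define \<rho> where "\<rho> = min \<delta> r / (4 * dd)"
      have rho0: "0 < \<rho>" using d r dd1 by (simp add: \<rho>_def)
      have rho_d: "2 * dd * \<rho> < \<delta>" using d r dd1 by (simp add: \<rho>_def field_simps)
      have rho_r: "2 * dd * \<rho> \<le> r" using d r dd1 by (simp add: \<rho>_def field_simps)
      obtain \<gamma> g where dvg: "dv \<gamma> g" and g1: "\<gamma> 1 \<le> x" and near: "Ufun f x - \<kappa> * \<rho> < Jfun f \<gamma>"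
        using U_near[of "\<kappa> * \<rho>" x] k0 rho0 by auto
      show False
      proof (cases "\<exists>i. \<gamma> 1 $ i \<le> x $ i - \<rho>")
        case True
        then obtain i where i: "\<gamma> 1 $ i \<le> x $ i - \<rho>" by blast
        define y where "y = x - \<rho> *\<^sub>R axis i 1"
        have gy: "\<gamma> 1 \<le> y" using g1 i unfolding y_def less_eq_vec_def by (auto simp: axis_def)
        have "Ufun f x - \<kappa> * \<rho> < Ufun f y"
          using near J_le_U[of \<gamma> y] gy dvg admissible_dv by fastforce
        also have "Ufun f y \<le> Ufun f x + inner p (y - x) + \<kappa> * norm (y - x)"
        proof (rule d(2))
          have "\<rho> \<le> 2 * dd * \<rho>" using rho0 dd1 by simp
          then have "\<rho> < \<delta>" using rho_d by linarith
          then show "norm (y - x) < \<delta>" using rho0 by (simp add: y_def norm_axis_scale)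
        qed
        also have "\<dots> = Ufun f x - \<rho> * p $ i + \<kappa> * \<rho>"
          using rho0 by (simp add: y_def norm_axis_scale inner_axis1)
        finally have "p $ i < 2 * \<kappa>" using rho0 by (simp add: algebra_simps)
        moreover have "2 * \<kappa> < m"
        proof -
          have "2 * \<kappa> < 16 * \<kappa>" using k0 by simp
          also have "16 * \<kappa> \<le> 16 * dd * \<kappa>" using dd1 k0 by simp
          also have "\<dots> \<le> m" using k16 th m0 by simp
          finally show ?thesis .
        qed
        ultimately show False using pm[of i] by simp
      next
        case False
        then have g1b: "x $ i - \<rho> < \<gamma> 1 $ i" for i using not_le by blast
        define b :: "real^'n" where "b = x - (2 * \<rho>) *\<^sub>R 1"
        have bi: "b $ i = x $ i - 2 * \<rho>" for i by (simp add: b_def)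
        define A where "A = (\<lambda>j. {\<tau>\<in>{0..1}. \<gamma> \<tau> $ j \<le> b $ j})"
        define sj where "sj = (\<lambda>j. if A j = {} then 0 else Sup (A j))"
        define s where "s = Max (range sj)"
        have contj: "continuous_on {0..1} (\<lambda>\<tau>. \<gamma> \<tau> $ j)" for j
          by (rule continuous_on_component[OF dv_cont[OF dvg]])
        have clA: "closed (A j)" for j unfolding A_def
          using continuous_closed_preimage[OF contj[of j], of "{..b $ j}"] by (simp add: vimage_def Int_def)
        have bdA: "bdd_above (A j)" for j unfolding A_def by (auto intro: bdd_above_Icc bdd_above_mono)
        have sjA: "A j \<noteq> {} \<Longrightarrow> sj j \<in> A j" for j
          using closed_contains_Sup[OF _ bdA clA] by (simp add: sj_def)
        have Asj: "\<tau> \<in> A j \<Longrightarrow> \<tau> \<le> sj j" for \<tau> j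
          using cSup_upper[OF _ bdA] by (auto simp: sj_def)
        have sj01: "0 \<le> sj j \<and> sj j < 1" for j
        proof (cases "A j = {}")
          case True then show ?thesis by (simp add: sj_def)
        next
          case False
          have "sj j \<in> A j" by (rule sjA[OF False])
          then have "\<gamma> (sj j) $ j \<le> b $ j" "0 \<le> sj j" "sj j \<le> 1" by (auto simp: A_def)
          moreover have "b $ j < \<gamma> 1 $ j" using g1b[of j] rho0 by (simp add: bi)
          ultimately show ?thesis by (cases "sj j = 1") auto
        qed
        have "s \<in> range sj" unfolding s_def by (rule Max_in) auto
        then obtain j0 where j0: "s = sj j0" by blast
        have s01: "0 \<le> s" "s < 1" using sj01[of j0] j0 by auto
        have sjs: "sj j \<le> s" for j unfolding s_def by simp
        have above: "b $ j < \<gamma> \<tau> $ j" if "s < \<tau>" "\<tau> \<le> 1" for \<tau> j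
        proof (rule ccontr)
          assume "\<not> b $ j < \<gamma> \<tau> $ j"
          then have "\<tau> \<in> A j" using that s01 by (auto simp: A_def)
          then show False using Asj[of \<tau> j] sjs[of j] that by simp
        qed
        have inbox: "b \<le> \<gamma> \<tau> \<and> \<gamma> \<tau> \<le> x" if "s \<le> \<tau>" "\<tau> \<le> 1" for \<tau>
        proof
          show "\<gamma> \<tau> \<le> x" using dv_mono_vec[OF dvg, of \<tau> 1] that s01 g1 by simp
          show "b \<le> \<gamma> \<tau>" unfolding less_eq_vec_def
          proof
            fix j
            show "b $ j \<le> \<gamma> \<tau> $ j"
            proof (cases "\<tau> = s")
              case True
              show ?thesis unfolding True
                by (rule closure_le[OF contj s01]) (use above in \<open>auto simp: less_imp_le\<close>)
            next
              case False then show ?thesis using above[of \<tau> j] that by simp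
            qed
          qed
        qed
        have nb: "norm (\<gamma> \<tau> - x) \<le> 2 * dd * \<rho>" if "s \<le> \<tau>" "\<tau> \<le> 1" for \<tau>
        proof -
          have "norm (\<gamma> \<tau> - x) \<le> CARD('n) * (2 * \<rho>)"
            by (rule norm_box[of x "2 * \<rho>" "\<gamma> \<tau>"]) (use inbox[OF that] in \<open>auto simp: less_eq_vec_def bi\<close>)
          then show ?thesis by (simp add: dd_def)
        qed
        have fcs: "f (\<gamma> \<tau>) \<le> c" if "\<tau> \<in> {s..1}" for \<tau>
          using nb[of \<tau>] that rho_r by (intro fc) (auto simp: dist_norm norm_minus_commute)
        define \<Delta> where "\<Delta> = \<gamma> 1 - \<gamma> s"
        have D0: "0 \<le> \<Delta> $ i" for i using dv_mono[OF dvg s01(1), of 1 i] s01 by (simp add: \<Delta>_def)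
        define e where "e = \<kappa> * \<rho> / Sp"
        have e0: "0 < e" using k0 rho0 Sp0 by (simp add: e_def)
        have eSp: "e * Sp = \<kappa> * \<rho>" using Sp0 by (simp add: e_def)
        have ib: "integral {s..1} (integ f \<gamma>) \<le> root CARD('n) c * root CARD('n) (\<Prod>i\<in>UNIV. \<Delta> $ i + e)"
          unfolding \<Delta>_def by (rule integ_bound[OF dvg meas nonneg bnd s01(1) _ order_refl fcs e0]) (use s01 in auto)
        have am: "root CARD('n) (\<Prod>i\<in>UNIV. \<Delta> $ i + e) \<le> (inner p \<Delta> + e * Sp) / (dd * P)"
        proof -
          have "root CARD('n) (\<Prod>i\<in>UNIV. \<Delta> $ i + e) \<le> (\<Sum>i\<in>UNIV. p $ i * (\<Delta> $ i + e)) / (CARD('n) * root CARD('n) (\<Prod>i\<in>UNIV. p $ i))"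
            by (rule amgm_weighted) (use D0 e0 ppos in \<open>auto simp: add_nonneg_pos less_imp_le\<close>)
          also have "(\<Sum>i\<in>UNIV. p $ i * (\<Delta> $ i + e)) = inner p \<Delta> + e * Sp"
            by (simp add: inner_vec_def Sp_def algebra_simps sum.distrib sum_distrib_left)
          finally show ?thesis by (simp add: dd_def P_def Pp_def)
        qed
        have ipD: "0 \<le> inner p \<Delta>" by (rule inner_nonneg) (use pnn D0 in auto)
        have ibt: "integral {s..1} (integ f \<gamma>) \<le> \<theta> * (inner p \<Delta> + e * Sp)"
        proof -
          have "root CARD('n) c * root CARD('n) (\<Prod>i\<in>UNIV. \<Delta> $ i + e) \<le> root CARD('n) c * ((inner p \<Delta> + e * Sp) / (dd * P))"
            by (rule mult_left_mono[OF am]) (use c0 in simp)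
          then show ?thesis using ib by (simp add: \<theta>_def)
        qed
        have Us: "Ufun f (\<gamma> s) \<le> Ufun f x - inner p \<Delta> + \<kappa> * (2 * dd * \<rho>)"
        proof -
          have n1: "norm (\<gamma> s - x) < \<delta>" using nb[of s] s01 rho_d by simp
          have "Ufun f (\<gamma> s) \<le> Ufun f x + inner p (\<gamma> s - x) + \<kappa> * norm (\<gamma> s - x)" by (rule d(2)[OF n1])
          moreover have "inner p (\<gamma> s - x) \<le> - inner p \<Delta>"
          proof -
            have "inner p (\<gamma> s - x) = - inner p \<Delta> + inner p (\<gamma> 1 - x)" by (simp add: \<Delta>_def inner_diff_right)
            moreover have "inner p (\<gamma> 1 - x) \<le> 0" by (rule inner_nonpos) (use pnn g1 in \<open>auto simp: less_eq_vec_def\<close>)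
            ultimately show ?thesis by simp
          qed
          moreover have "\<kappa> * norm (\<gamma> s - x) \<le> \<kappa> * (2 * dd * \<rho>)"
            by (rule mult_left_mono[OF nb]) (use s01 k0 in auto)
          ultimately show ?thesis by simp
        qed
        have main: "(1 - \<theta>) * inner p \<Delta> < \<kappa> * \<rho> + 2 * dd * \<kappa> * \<rho> + \<theta> * \<kappa> * \<rho>"
        proof -
          have "Ufun f x - \<kappa> * \<rho> < Ufun f (\<gamma> s) + integral {s..1} (integ f \<gamma>)"
            using near J_le_Us[OF dvg s01(1)] s01 by force
          moreover have "integral {s..1} (integ f \<gamma>) \<le> \<theta> * inner p \<Delta> + \<theta> * \<kappa> * \<rho>"
            using ibt eSp by (simp add: distrib_left)
          moreover have "\<kappa> * (2 * dd * \<rho>) = 2 * dd * \<kappa> * \<rho>" by simp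
          moreover have "(1 - \<theta>) * inner p \<Delta> = inner p \<Delta> - \<theta> * inner p \<Delta>" by (simp add: algebra_simps)
          ultimately show ?thesis using Us by linarith
        qed
        have lower: "m * \<rho> / 2 \<le> inner p \<Delta>"
        proof (cases "\<exists>j. A j \<noteq> {} \<and> sj j = s")
          case True
          then obtain j where j: "A j \<noteq> {}" "sj j = s" by blast
          have "\<gamma> s $ j \<le> b $ j" using sjA[OF j(1)] j(2) by (auto simp: A_def)
          then have "\<rho> \<le> \<Delta> $ j" using g1b[of j] by (simp add: \<Delta>_def bi)
          then have "m * \<rho> \<le> p $ j * \<Delta> $ j" using pm[of j] m0 rho0 by (simp add: mult_mono)
          also have "\<dots> \<le> inner p \<Delta>" by (rule inner_ge_comp) (use pnn D0 in auto)
          finally have "m * \<rho> \<le> inner p \<Delta>" .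
          moreover have "0 \<le> m * \<rho>" using m0 rho0 by simp
          ultimately show ?thesis by linarith
        next
          case False
          then have "A j0 = {}" using j0 by auto
          then have s0: "s = 0" using j0 by (simp add: sj_def)
          have Jle: "Jfun f \<gamma> \<le> \<theta> * (inner p \<Delta> + e * Sp)" using ibt s0 by (simp add: Jfun_integ)
          have Ux: "\<rho> * (Sp - dd * \<kappa>) \<le> Ufun f x"
          proof -
            define y where "y = x - \<rho> *\<^sub>R (1::real^'n)"
            have ny: "norm (y - x) \<le> dd * \<rho>"
            proof -
              have "norm (y - x) \<le> CARD('n) * \<rho>"
                by (rule norm_box[of x \<rho> y]) (use rho0 in \<open>auto simp: y_def\<close>)
              then show ?thesis by (simp add: dd_def)
            qed
            have "dd * \<rho> \<le> 2 * dd * \<rho>" using dd1 rho0 by simp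
            then have "norm (y - x) < \<delta>" using ny rho_d by linarith
            then have "Ufun f y \<le> Ufun f x + inner p (y - x) + \<kappa> * norm (y - x)" by (rule d(2))
            moreover have "inner p (y - x) = - \<rho> * Sp"
              by (simp add: y_def inner_vec_def Sp_def sum_distrib_left mult.commute)
            moreover have "\<kappa> * norm (y - x) \<le> \<kappa> * (dd * \<rho>)" by (rule mult_left_mono[OF ny]) (use k0 in simp)
            moreover have "0 \<le> Ufun f y" by (rule U_nonneg)
            ultimately show ?thesis by (simp add: algebra_simps)
          qed
          have "\<rho> * (Sp - dd * \<kappa>) - \<kappa> * \<rho> < \<theta> * (inner p \<Delta> + e * Sp)" using Ux near Jle by simp
          also have "\<dots> \<le> inner p \<Delta> + e * Sp"
            using th ipD e0 Sp0 by (simp add: mult_left_le_one_le)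
          finally have "\<rho> * (Sp - dd * \<kappa>) - 2 * \<kappa> * \<rho> < inner p \<Delta>" using eSp by simp
          moreover have "m * \<rho> / 2 \<le> \<rho> * (Sp - dd * \<kappa>) - 2 * \<kappa> * \<rho>"
          proof -
            have "\<kappa> \<le> dd * \<kappa>" using dd1 k0 by simp
            moreover have "16 * dd * \<kappa> \<le> m" using k16 th m0 by (simp add: mult_left_le_one_le)
            moreover have "16 * dd * \<kappa> = 16 * (dd * \<kappa>)" by simp
            moreover have "0 \<le> \<kappa>" using k0 by simp
            ultimately have "m / 2 \<le> Sp - dd * \<kappa> - 2 * \<kappa>" using Spm by linarith
            then have "\<rho> * (m / 2) \<le> \<rho> * (Sp - dd * \<kappa> - 2 * \<kappa>)" by (rule mult_left_mono) (use rho0 in simp)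
            then show ?thesis by (simp add: algebra_simps)
          qed
          ultimately show ?thesis by simp
        qed
        have "(1 - \<theta>) * (m * \<rho> / 2) \<le> (1 - \<theta>) * inner p \<Delta>"
          by (rule mult_left_mono[OF lower]) (use th in simp)
        also note main
        also have "\<kappa> * \<rho> + 2 * dd * \<kappa> * \<rho> + \<theta> * \<kappa> * \<rho> \<le> 4 * dd * \<kappa> * \<rho>"
        proof -
          have "\<theta> * \<kappa> * \<rho> \<le> \<kappa> * \<rho>" using th k0 rho0 by (simp add: mult_left_le_one_le)
          moreover have "\<kappa> * \<rho> \<le> dd * \<kappa> * \<rho>" using dd1 k0 rho0 by simp
          moreover have "2 * dd * \<kappa> * \<rho> = 2 * (dd * \<kappa> * \<rho>)" "4 * dd * \<kappa> * \<rho> = 4 * (dd * \<kappa> * \<rho>)" by simp_all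
          ultimately show ?thesis by linarith
        qed
        also have "4 * dd * \<kappa> * \<rho> = (1 - \<theta>) * m * \<rho> / 4"
        proof -
          have "4 * dd * \<kappa> * \<rho> = (16 * dd * \<kappa>) * \<rho> / 4" by simp
          then show ?thesis using k16 by simp
        qed
        finally show False using th m0 rho0 by (simp add: field_simps)
      qed
    qed
  qed
qed

end



lemma integral_zero_on:
  fixes k :: "real \<Rightarrow> real"
  assumes "\<And>s. s \<in> {a..b} \<Longrightarrow> k s = 0"
  shows "integral {a..b} k = 0"
  using integral_zero_but_end[of a b a k] assms by auto

lemma bump_a:
  fixes t0 t1 :: real
  assumes t: "0 \<le> t0" "t0 < t1" "t1 \<le> 1"
  defines "k \<equiv> (\<lambda>s. max 0 ((s - t0) * (t1 - s)) * (6 / (t1 - t0) ^ 3))"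
  shows "continuous_on UNIV k" "\<And>s. 0 \<le> k s" "\<And>s. s \<le> t0 \<Longrightarrow> k s = 0" "\<And>s. t1 \<le> s \<Longrightarrow> k s = 0"
    "\<And>t. t \<in> {0..t0} \<Longrightarrow> integral {0..t} k = 0"
    "\<And>t. t \<in> {t1..1} \<Longrightarrow> integral {0..t} k = 1"
proof -
  show c: "continuous_on UNIV k" unfolding k_def by (intro continuous_intros)
  show "0 \<le> k s" for s using t unfolding k_def by simp
  show z1: "k s = 0" if "s \<le> t0" for s using that t unfolding k_def
    by (simp add: mult_nonpos_nonneg)
  show z2: "k s = 0" if "t1 \<le> s" for s using that t unfolding k_def
    by (simp add: mult_nonneg_nonpos)
  show "integral {0..t} k = 0" if "t \<in> {0..t0}" for t
    by (rule integral_zero_on) (use that z1 in auto)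
  have int: "k integrable_on {a..b}" for a b by (rule integrable_continuous_real) (rule continuous_on_subset[OF c], simp)
  define F where "F = (\<lambda>s::real. (6 / (t1 - t0) ^ 3) * (- (s ^ 3) / 3 + (t0 + t1) * s ^ 2 / 2 - t0 * t1 * s))"
  have "(k has_integral (F t1 - F t0)) {t0..t1}"
  proof (rule fundamental_theorem_of_calculus)
    show "t0 \<le> t1" using t by simp
    fix s assume s: "s \<in> {t0..t1}"
    have "k s = (6 / (t1 - t0) ^ 3) * ((s - t0) * (t1 - s))" using s unfolding k_def by (simp add: mult.commute)
    moreover have "(F has_real_derivative (6 / (t1 - t0) ^ 3) * ((s - t0) * (t1 - s))) (at s within {t0..t1})"
      unfolding F_def by (rule derivative_eq_intros refl | simp)+ (simp add: algebra_simps power2_eq_square)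
    ultimately show "(F has_vector_derivative k s) (at s within {t0..t1})"
      by (simp add: has_real_derivative_iff_has_vector_derivative)
  qed
  moreover have "F t1 - F t0 = 1"
  proof -
    have ne: "t1 - t0 \<noteq> 0" using t by simp
    have poly: "(- (t1 ^ 3) / 3 + (t0 + t1) * t1 ^ 2 / 2 - t0 * t1 * t1) - (- (t0 ^ 3) / 3 + (t0 + t1) * t0 ^ 2 / 2 - t0 * t1 * t0) = (t1 - t0) ^ 3 / 6"
      by (simp add: field_simps power2_eq_square power3_eq_cube)
    have "F t1 - F t0 = (6 / (t1 - t0) ^ 3) * ((- (t1 ^ 3) / 3 + (t0 + t1) * t1 ^ 2 / 2 - t0 * t1 * t1) - (- (t0 ^ 3) / 3 + (t0 + t1) * t0 ^ 2 / 2 - t0 * t1 * t0))"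
      unfolding F_def by (simp add: right_diff_distrib)
    also have "\<dots> = (6 / (t1 - t0) ^ 3) * ((t1 - t0) ^ 3 / 6)" by (simp only: poly)
    finally have "F t1 - F t0 = (6 / (t1 - t0) ^ 3) * ((t1 - t0) ^ 3 / 6)" .
    then show ?thesis using ne by simp
  qed
  ultimately have mid: "integral {t0..t1} k = 1" by (simp add: integral_unique)
  show "integral {0..t} k = 1" if tt: "t \<in> {t1..1}" for t
  proof -
    have "integral {0..t} k = integral {0..t0} k + integral {t0..t} k"
      by (rule Henstock_Kurzweil_Integration.integral_combine[symmetric]) (use t tt int in auto)
    also have "integral {t0..t} k = integral {t0..t1} k + integral {t1..t} k"
      by (rule Henstock_Kurzweil_Integration.integral_combine[symmetric]) (use t tt int in auto)
    also have "integral {0..t0} k = 0" by (rule integral_zero_on) (use z1 in auto)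
    also have "integral {t1..t} k = 0" by (rule integral_zero_on) (use z2 in auto)
    finally show ?thesis using mid by simp
  qed
qed

lemma bump_b:
  fixes t1 :: real
  assumes t: "0 \<le> t1" "t1 < 1"
  defines "k \<equiv> (\<lambda>s. max 0 (s - t1) * (2 / (1 - t1) ^ 2))"
  shows "continuous_on UNIV k" "\<And>s. 0 \<le> k s" "\<And>s. s \<le> t1 \<Longrightarrow> k s = 0"
    "\<And>t. t \<in> {0..t1} \<Longrightarrow> integral {0..t} k = 0"
    "integral {t1..1} k = 1"
proof -
  show c: "continuous_on UNIV k" unfolding k_def by (intro continuous_intros)
  show "0 \<le> k s" for s using t unfolding k_def by simp
  show z1: "k s = 0" if "s \<le> t1" for s using that t unfolding k_def by simp
  show "integral {0..t} k = 0" if "t \<in> {0..t1}" for t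
    by (rule integral_zero_on) (use that z1 in auto)
  define C where "C = 1 / (1 - t1) ^ 2"
  define F where "F = (\<lambda>s::real. C * (s - t1) ^ 2)"
  have "(k has_integral (F 1 - F t1)) {t1..1}"
  proof (rule fundamental_theorem_of_calculus)
    show "t1 \<le> 1" using t by simp
    fix s assume s: "s \<in> {t1..1}"
    have "k s = C * (2 * (s - t1))" using s unfolding k_def C_def by simp
    moreover have "(F has_real_derivative C * (2 * (s - t1))) (at s within {t1..1})"
      unfolding F_def by (rule derivative_eq_intros refl | simp)+
    ultimately show "(F has_vector_derivative k s) (at s within {t1..1})"
      by (simp add: has_real_derivative_iff_has_vector_derivative)
  qed
  moreover have "F 1 - F t1 = 1" using t by (simp add: F_def C_def)
  ultimately show "integral {t1..1} k = 1" by (simp add: integral_unique)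
qed




lemma root_prod_scale:
  fixes v :: "real^'n"
  assumes "0 \<le> l"
  shows "root CARD('n) (\<Prod>i\<in>UNIV. l * v $ i) = l * root CARD('n) (\<Prod>i\<in>UNIV. v $ i)"
  using assms by (simp add: prod.distrib real_root_mult real_root_power_cancel)

context setting begin

lemma extend:
  fixes \<gamma> :: "real \<Rightarrow> real^'n"
  assumes dvg: "dv \<gamma> g" and gy: "\<gamma> 1 \<le> y" and v: "\<And>i. 0 < v $ i" and h: "0 < h" and e: "0 < \<epsilon>"
    and c: "0 \<le> c" and R: "h * norm v < R" and fc: "\<And>w. norm (w - y) \<le> R \<Longrightarrow> c \<le> f w"
  shows "\<exists>\<eta>. admissible \<eta> \<and> \<eta> 1 = y + h *\<^sub>R v \<and>
           Jfun f \<gamma> - \<epsilon> + h * root CARD('n) c * root CARD('n) (\<Prod>i\<in>UNIV. v $ i) \<le> Jfun f \<eta>"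
proof -
  define z where "z = \<gamma> 1"
  define w0 where "w0 = y - z"
  have w0: "0 \<le> w0 $ i" for i using gy by (simp add: w0_def z_def less_eq_vec_def)
  define q where "q = \<epsilon> / (2 * (root CARD('n) B + 1))"
  have q0: "0 < q" using e B0 by (simp add: q_def add_nonneg_pos)
  have rq: "root CARD('n) B * (2 * q) < \<epsilon>"
  proof -
    have p: "0 < root CARD('n) B + 1" using B0 by (simp add: add_nonneg_pos)
    have "root CARD('n) B * (2 * q) = \<epsilon> * (root CARD('n) B / (root CARD('n) B + 1))"
      using p unfolding q_def by (simp add: divide_simps)
    also have "\<dots> < \<epsilon> * 1" by (rule mult_strict_left_mono) (use e p in \<open>auto simp: divide_less_eq\<close>)
    finally show ?thesis by simp
  qed
  define N where "N = norm v"
  have RhN: "0 < R - h * N" using R by (simp add: N_def)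
  obtain \<delta>' where d': "0 < \<delta>'" "\<And>t. t \<in> {0..1} \<Longrightarrow> dist t 1 < \<delta>' \<Longrightarrow> dist (\<gamma> t) (\<gamma> 1) < min q (R - h * N)"
  proof -
    have "1 \<in> {0..(1::real)}" by simp
    moreover have "0 < min q (R - h * N)" using q0 RhN by simp
    ultimately show ?thesis using dv_cont[OF dvg] that unfolding continuous_on_iff by blast
  qed
  define \<tau> where "\<tau> = min (1/4) (\<delta>' / 4)"
  have tau: "0 < \<tau>" "\<tau> \<le> 1/4" "\<tau> < \<delta>' / 2" using d' by (auto simp: \<tau>_def)
  define t0 where "t0 = 1 - 2 * \<tau>"
  define t1 where "t1 = 1 - \<tau>"
  have tt: "0 \<le> t0" "t0 < t1" "t1 \<le> 1" "t1 < 1" "0 \<le> t1" using tau by (auto simp: t0_def t1_def)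
  have close: "dist (\<gamma> t) (\<gamma> 1) < min q (R - h * N)" if "t \<in> {t0..1}" for t
    using that tau tt by (intro d'(2)) (auto simp: t0_def dist_real_def)
  define ka where "ka = (\<lambda>s. max 0 ((s - t0) * (t1 - s)) * (6 / (t1 - t0) ^ 3))"
  define kb where "kb = (\<lambda>s. max 0 (s - t1) * (2 / (1 - t1) ^ 2))"
  note BA = bump_a[OF tt(1,2,3), folded ka_def]
  note BB = bump_b[OF tt(5,4), folded kb_def]
  define A where "A = (\<lambda>t. integral {0..t} ka)"
  define Bt where "Bt = (\<lambda>t. integral {0..t} kb)"
  have kbi: "kb integrable_on {a..b}" for a b
    by (rule integrable_continuous_real) (rule continuous_on_subset[OF BB(1)], simp)
  have kbnn: "0 \<le> kb s" for s unfolding kb_def using tt by simp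
  have kann: "0 \<le> ka s" for s unfolding ka_def using tt by simp
  have ka0: "ka s = 0" if "s \<le> t0" for s unfolding ka_def using tt that by (simp add: mult_nonpos_nonneg)
  have kb0: "kb s = 0" if "s \<le> t1" for s unfolding kb_def using tt that by simp
  have kac: "continuous_on {0..1} ka" using BA(1) by (rule continuous_on_subset) auto
  have kbc: "continuous_on {0..1} kb" using BB(1) by (rule continuous_on_subset) auto
  have Ad: "(A has_real_derivative ka t) (at t within {0..1})" if "t \<in> {0..1}" for t
    unfolding A_def has_real_derivative_iff_has_vector_derivative
    by (rule integral_has_vector_derivative[OF kac that])
  have Bd: "(Bt has_real_derivative kb t) (at t within {0..1})" if "t \<in> {0..1}" for t
    unfolding Bt_def has_real_derivative_iff_has_vector_derivative
    by (rule integral_has_vector_derivative[OF kbc that])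
  have B1: "Bt 1 = 1"
  proof -
    have "Bt 1 = integral {0..t1} kb + integral {t1..1} kb" unfolding Bt_def
      by (rule Henstock_Kurzweil_Integration.integral_combine[symmetric])
         (use tt kbi in auto)
    then show ?thesis using BB(4)[of t1] BB(5) tt by simp
  qed
  have Ble1: "Bt t \<le> 1" if "t \<in> {0..1}" for t
  proof -
    have "Bt 1 = Bt t + integral {t..1} kb" unfolding Bt_def
      by (rule Henstock_Kurzweil_Integration.integral_combine[symmetric])
         (use that kbi in auto)
    moreover have "0 \<le> integral {t..1} kb"
      by (rule integral_nonneg[OF kbi kbnn])
    ultimately show ?thesis using B1 by simp
  qed
  have Bge0: "0 \<le> Bt t" if "t \<in> {0..1}" for t unfolding Bt_def
    by (rule integral_nonneg[OF kbi kbnn])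
  define \<eta> where "\<eta> = (\<lambda>t. \<gamma> t + A t *\<^sub>R w0 + (h * Bt t) *\<^sub>R v)"
  define \<eta>' where "\<eta>' = (\<lambda>t. g t + ka t *\<^sub>R w0 + (h * kb t) *\<^sub>R v)"
  have dveta: "dv \<eta> \<eta>'"
    unfolding dv_def
  proof (rule conjI)
    show "continuous_on {0..1} \<eta>'" unfolding \<eta>'_def
      using dvg[unfolded dv_def] kac kbc by (intro continuous_intros) auto
    show "\<forall>t\<in>{0..1}. (\<eta> has_vector_derivative \<eta>' t) (at t within {0..1}) \<and> (\<forall>i. 0 \<le> \<eta>' t $ i) \<and> \<eta>' t \<noteq> 0"
    proof
      fix t :: real assume t: "t \<in> {0..1}"
      have gd: "(\<gamma> has_vector_derivative g t) (at t within {0..1})" "\<forall>i. 0 \<le> g t $ i" "g t \<noteq> 0"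
        using dvg t unfolding dv_def by auto
      have "(\<eta> has_vector_derivative (g t + (A t *\<^sub>R 0 + ka t *\<^sub>R w0) + ((h * Bt t) *\<^sub>R 0 + (h * kb t) *\<^sub>R v))) (at t within {0..1})"
        unfolding \<eta>_def
        by (intro has_vector_derivative_add has_vector_derivative_scaleR gd(1) Ad[OF t] has_vector_derivative_const
             DERIV_cmult Bd[OF t])
      moreover have "(g t + (A t *\<^sub>R 0 + ka t *\<^sub>R w0) + ((h * Bt t) *\<^sub>R 0 + (h * kb t) *\<^sub>R v)) = \<eta>' t"
        by (simp add: \<eta>'_def)
      ultimately have "(\<eta> has_vector_derivative \<eta>' t) (at t within {0..1})" by simp
      moreover have nn: "0 \<le> \<eta>' t $ i" for i
        using gd(2) w0[of i] v[of i] h kann[of t] kbnn[of t] by (simp add: \<eta>'_def less_imp_le)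
      moreover have "\<eta>' t \<noteq> 0"
      proof
        assume z0: "\<eta>' t = 0"
        obtain i where gi: "g t $ i \<noteq> 0" using gd(3) by (metis vec_eq_iff zero_index)
        have gp: "0 < g t $ i" using gd(2) gi by (simp add: order_less_le)
        have "0 \<le> ka t * w0 $ i" using kann[of t] w0[of i] by simp
        moreover have "0 \<le> h * kb t * v $ i" using kbnn[of t] v[of i] h by (simp add: less_imp_le)
        ultimately have "0 < \<eta>' t $ i" using gp by (simp add: \<eta>'_def)
        then show False using z0 by simp
      qed
      ultimately show "(\<eta> has_vector_derivative \<eta>' t) (at t within {0..1}) \<and> (\<forall>i. 0 \<le> \<eta>' t $ i) \<and> \<eta>' t \<noteq> 0"
        by blast
    qed
  qed
  have A1: "A 1 = 1" using BA(6)[of 1] tt by (simp add: A_def)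
  have eta1: "\<eta> 1 = y + h *\<^sub>R v"
    using A1 B1 by (simp add: \<eta>_def w0_def z_def)
  have inteta: "integ f \<eta> integrable_on {a..b}" if "0 \<le> a" "b \<le> 1" for a b
    by (rule integ_integrable_sub[OF dveta meas nonneg bnd that])
  have intgam: "integ f \<gamma> integrable_on {a..b}" if "0 \<le> a" "b \<le> 1" for a b
    by (rule integ_integrable_sub[OF dvg meas nonneg bnd that])
  have P1: "integral {0..t0} (integ f \<eta>) = integral {0..t0} (integ f \<gamma>)"
  proof (rule integral_cong)
    fix t assume t: "t \<in> {0..t0}"
    then have t01: "t \<in> {0..1}" using tt by auto
    have "A t = 0" using BA(5)[OF t] by (simp add: A_def)
    moreover have "Bt t = 0" using BB(4)[of t] t tt by (simp add: Bt_def)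
    moreover have "ka t = 0" using ka0[of t] t by simp
    moreover have "kb t = 0" using kb0[of t] t tt by simp
    ultimately have "\<eta> t = \<gamma> t" "\<eta>' t = g t" by (simp_all add: \<eta>_def \<eta>'_def)
    then show "integ f \<eta> t = integ f \<gamma> t"
      using dv_integ[OF dveta t01, of f] dv_integ[OF dvg t01, of f] by simp
  qed
  have P2: "0 \<le> integral {t0..t1} (integ f \<eta>)"
    by (rule integral_nonneg[OF inteta]) (use tt in \<open>auto intro!: integ_nonneg[OF dveta nonneg]\<close>)
  define V where "V = root CARD('n) (\<Prod>i\<in>UNIV. v $ i)"
  have V0: "0 \<le> V" using v by (simp add: V_def prod_nonneg less_imp_le)
  have P3: "root CARD('n) c * h * V \<le> integral {t1..1} (integ f \<eta>)"
  proof -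
    have kbint: "((\<lambda>t. root CARD('n) c * h * V * kb t) has_integral root CARD('n) c * h * V * 1) {t1..1}"
      using BB(5) has_integral_mult_right[OF integrable_integral[OF integrable_continuous_real[OF continuous_on_subset[OF BB(1)]]]]
      by (metis subset_UNIV)
    have "integral {t1..1} (\<lambda>t. root CARD('n) c * h * V * kb t) \<le> integral {t1..1} (integ f \<eta>)"
    proof (rule integral_le[OF has_integral_integrable[OF kbint] inteta[OF tt(5) order_refl]])
      fix t assume t: "t \<in> {t1..1}"
      then have t01: "t \<in> {0..1}" using tt by auto
      have At: "A t = 1" using BA(6)[OF t] by (simp add: A_def)
      have "norm (\<eta> t - y) \<le> R"
      proof -
        have "\<eta> t - y = (\<gamma> t - \<gamma> 1) + (h * Bt t) *\<^sub>R v" using At by (simp add: \<eta>_def w0_def z_def)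
        then have "norm (\<eta> t - y) \<le> norm (\<gamma> t - \<gamma> 1) + h * Bt t * N"
          using h Bge0[OF t01] by (simp add: N_def norm_triangle_ineq order_trans[OF norm_triangle_ineq])
        also have "norm (\<gamma> t - \<gamma> 1) \<le> R - h * N"
          using close[of t] t tt by (simp add: dist_norm)
        also have "h * Bt t * N \<le> h * N"
        proof -
          have "Bt t * N \<le> N" using Ble1[OF t01] Bge0[OF t01] by (simp add: N_def mult_left_le_one_le)
          then show ?thesis using h by (simp add: mult.assoc)
        qed
        finally show ?thesis by simp
      qed
      then have fct: "c \<le> f (\<eta> t)" by (rule fc)
      have ge: "h * kb t * v $ i \<le> \<eta>' t $ i" for i
        using dvg[unfolded dv_def] t01 w0[of i] kann[of t] by (simp add: \<eta>'_def)
      have "root CARD('n) (\<Prod>i\<in>UNIV. h * kb t * v $ i) \<le> root CARD('n) (\<Prod>i\<in>UNIV. \<eta>' t $ i)"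
        using ge h kbnn[of t] v by (auto intro!: prod_mono simp: less_imp_le)
      then have m2: "h * kb t * V \<le> root CARD('n) (\<Prod>i\<in>UNIV. \<eta>' t $ i)"
        using root_prod_scale[of "h * kb t" v] h kbnn[of t] by (simp add: V_def)
      have m1: "root CARD('n) c \<le> root CARD('n) (f (\<eta> t))" using fct by simp
      have "root CARD('n) c * (h * kb t * V) \<le> root CARD('n) (f (\<eta> t)) * root CARD('n) (\<Prod>i\<in>UNIV. \<eta>' t $ i)"
        by (rule mult_mono'[OF m1 m2]) (use c h kbnn[of t] V0 in auto)
      then show "root CARD('n) c * h * V * kb t \<le> integ f \<eta> t"
        using dv_integ[OF dveta t01, of f] by (simp add: mult_ac)
    qed
    then show ?thesis using integral_unique[OF kbint] BB(5) by simp
  qed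
  have L: "integral {t0..1} (integ f \<gamma>) < \<epsilon>"
  proof -
    have "integral {t0..1} (integ f \<gamma>) \<le> root CARD('n) B * root CARD('n) (\<Prod>i\<in>UNIV. (\<gamma> 1 - \<gamma> t0) $ i + q)"
      by (rule integ_bound[OF dvg meas nonneg bnd tt(1) _ order_refl bnd q0]) (use tt in auto)
    also have "root CARD('n) (\<Prod>i\<in>UNIV. (\<gamma> 1 - \<gamma> t0) $ i + q) \<le> 2 * q"
    proof -
      have "norm (\<gamma> 1 - \<gamma> t0) < q" using close[of t0] tt by (simp add: dist_norm norm_minus_commute)
      then have "(\<gamma> 1 - \<gamma> t0) $ i + q \<le> 2 * q" for i
        using component_le_norm_cart[of "\<gamma> 1 - \<gamma> t0" i] by simp
      moreover have "0 \<le> (\<gamma> 1 - \<gamma> t0) $ i" for i using dv_mono[OF dvg tt(1), of 1 i] tt by simp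
      ultimately have "(\<Prod>i\<in>UNIV. (\<gamma> 1 - \<gamma> t0) $ i + q) \<le> (\<Prod>i\<in>(UNIV::'n set). 2 * q)"
        using q0 by (intro prod_mono) auto
      then have "root CARD('n) (\<Prod>i\<in>UNIV. (\<gamma> 1 - \<gamma> t0) $ i + q) \<le> root CARD('n) ((2 * q) ^ CARD('n))"
        by simp
      also have "\<dots> = 2 * q" using q0 by (subst real_root_power_cancel) auto
      finally show ?thesis .
    qed
    then have "root CARD('n) B * root CARD('n) (\<Prod>i\<in>UNIV. (\<gamma> 1 - \<gamma> t0) $ i + q) \<le> root CARD('n) B * (2 * q)"
      by (rule mult_left_mono) (use B0 in simp)
    finally show ?thesis using rq by simp
  qed
  have Jg: "Jfun f \<gamma> = integral {0..t0} (integ f \<gamma>) + integral {t0..1} (integ f \<gamma>)"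
    unfolding Jfun_integ
    by (rule Henstock_Kurzweil_Integration.integral_combine[symmetric]) (use tt intgam in auto)
  have Je: "Jfun f \<eta> = integral {0..t0} (integ f \<eta>) + integral {t0..t1} (integ f \<eta>) + integral {t1..1} (integ f \<eta>)"
  proof -
    have "Jfun f \<eta> = integral {0..t0} (integ f \<eta>) + integral {t0..1} (integ f \<eta>)"
      unfolding Jfun_integ
      by (rule Henstock_Kurzweil_Integration.integral_combine[symmetric]) (use tt inteta in auto)
    moreover have "integral {t0..1} (integ f \<eta>) = integral {t0..t1} (integ f \<eta>) + integral {t1..1} (integ f \<eta>)"
      by (rule Henstock_Kurzweil_Integration.integral_combine[symmetric]) (use tt inteta in auto)
    ultimately show ?thesis by simp
  qed
  have "Jfun f \<gamma> - \<epsilon> + h * root CARD('n) c * V \<le> Jfun f \<eta>"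
    using Jg Je P1 P2 P3 L by (simp add: mult_ac)
  then show ?thesis using dveta eta1 admissible_dv V_def by blast
qed

end



context setting begin

lemma supersol:
  assumes p: "p \<in> subdiff (Ufun f) x"
  shows "lsc_env (\<lambda>y. f y / real CARD('n) ^ CARD('n)) x \<le> (\<Prod>i\<in>UNIV. p $ i)"
proof -
  define G where "G = (\<lambda>y. f y / real CARD('n) ^ CARD('n))"
  have Gb: "\<bar>G y\<bar> \<le> B" for y
  proof -
    have k: "1 \<le> real CARD('n) ^ CARD('n)" by (simp add: one_le_power)
    have "G y \<le> f y" unfolding G_def using divide_left_mono[OF k nonneg[of y]] k by simp
    then show ?thesis using bnd[of y] nonneg[of y] by (simp add: G_def)
  qed
  define l where "l = lsc_env G x"
  have pnn: "0 \<le> p $ i" for i by (rule subdiff_nonneg[OF p])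
  define Pp where "Pp = (\<Prod>i\<in>UNIV. p $ i)"
  have Pp0: "0 \<le> Pp" using pnn by (simp add: Pp_def prod_nonneg)
  show ?thesis unfolding G_def[symmetric] l_def[symmetric] Pp_def[symmetric]
  proof (rule ccontr)
    assume "\<not> l \<le> Pp" then have lt: "Pp < l" by simp
    define dd where "dd = real CARD('n)"
    have dd1: "1 \<le> dd" by (simp add: dd_def)
    define c' where "c' = (Pp + l) / 2"
    have c'1: "Pp < c'" "c' < l" using lt by (auto simp: c'_def)
    define c where "c = dd ^ CARD('n) * c'"
    have c0: "0 \<le> c" using c'1 Pp0 dd1 by (simp add: c_def)
    obtain r where r: "0 < r" "\<And>y. y \<in> cball x r \<Longrightarrow> c' < G y"
      using lsc_gt[of G B c' x] Gb c'1 by (auto simp: l_def)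
    have fc: "c \<le> f y" if "y \<in> cball x r" for y
      using r(2)[OF that] dd1 by (simp add: G_def c_def dd_def field_simps)
    have "((\<lambda>e. \<Prod>i\<in>UNIV. p $ i + e) \<longlongrightarrow> (\<Prod>i\<in>UNIV. p $ i + 0)) (at_right 0)"
      by (intro tendsto_intros)
    then have "eventually (\<lambda>e. (\<Prod>i\<in>UNIV. p $ i + e) < c') (at_right 0)"
      using c'1 by (intro order_tendstoD(2)) (auto simp: Pp_def)
    then have "eventually (\<lambda>e. 0 < e \<and> (\<Prod>i\<in>UNIV. p $ i + e) < c') (at_right (0::real))"
      using eventually_at_right_less[of "0::real"] by (auto elim: eventually_mono intro: eventually_conj)
    then obtain \<eta> where eta: "0 < \<eta>" "(\<Prod>i\<in>UNIV. p $ i + \<eta>) < c'"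
      using eventually_happens[of _ "at_right (0::real)"] by auto
    define v :: "real^'n" where "v = (\<chi> i. 1 / (p $ i + \<eta>))"
    have vpos: "0 < v $ i" for i using pnn[of i] eta by (simp add: v_def add_nonneg_pos)
    define Q where "Q = (\<Prod>i\<in>UNIV. p $ i + \<eta>)"
    have Q0: "0 < Q" using pnn eta by (simp add: Q_def prod_pos add_nonneg_pos)
    define V where "V = root CARD('n) (\<Prod>i\<in>UNIV. v $ i)"
    have V: "V = 1 / root CARD('n) Q" by (simp add: V_def v_def Q_def prod_dividef real_root_divide)
    have pv: "inner p v \<le> dd"
    proof -
      have "inner p v = (\<Sum>i\<in>UNIV. p $ i / (p $ i + \<eta>))" by (simp add: inner_vec_def v_def)
      also have "\<dots> \<le> (\<Sum>i\<in>(UNIV::'n set). 1)"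
      proof (rule sum_mono)
        fix i
        have "0 < p $ i + \<eta>" using pnn[of i] eta by simp
        then show "p $ i / (p $ i + \<eta>) \<le> 1" using eta by (simp add: divide_le_eq_1)
      qed
      finally show ?thesis by (simp add: dd_def)
    qed
    have rcV: "dd < root CARD('n) c * V"
    proof -
      have "root CARD('n) Q < root CARD('n) c'" using eta by (simp add: Q_def)
      moreover have "root CARD('n) c = dd * root CARD('n) c'"
        using dd1 by (simp add: c_def real_root_mult real_root_power_cancel dd_def)
      moreover have "0 < root CARD('n) Q" using Q0 by simp
      ultimately show ?thesis using dd1 by (simp add: V field_simps)
    qed
    define \<kappa> where "\<kappa> = root CARD('n) c * V - inner p v"
    have k0: "0 < \<kappa>" using rcV pv by (simp add: \<kappa>_def)
    define N where "N = norm v"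
    have "v \<noteq> 0" using vpos[of undefined] by (metis less_irrefl zero_index)
    then have N0: "0 < N" unfolding N_def by simp
    define \<epsilon> where "\<epsilon> = \<kappa> / (N + 2)"
    have e0: "0 < \<epsilon>" using k0 N0 by (simp add: \<epsilon>_def)
    obtain \<delta> where d: "0 < \<delta>" "\<And>y. norm (y - x) < \<delta> \<Longrightarrow> Ufun f y \<ge> Ufun f x + inner p (y - x) - \<epsilon> * norm (y - x)"
      using p e0 unfolding subdiff_def by blast
    define h where "h = min (\<delta> / (2 * N)) (r / (3 * N))"
    have h0: "0 < h" using d r N0 by (simp add: h_def)
    have hd: "h * N < \<delta>" using d r N0 by (simp add: h_def min_def field_simps)
    have hr: "3 * (h * N) \<le> r" using d r N0 by (simp add: h_def min_def field_simps)
    define y where "y = x - h *\<^sub>R v"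
    have ny: "norm (y - x) = h * N" using h0 by (simp add: y_def N_def)
    have Uy: "Ufun f x - h * inner p v - \<epsilon> * (h * N) \<le> Ufun f y"
      using d(2)[of y] ny hd by (simp add: y_def inner_minus_right)
    obtain \<gamma> g where dvg: "dv \<gamma> g" and g1: "\<gamma> 1 \<le> y" and near: "Ufun f y - \<epsilon> * h < Jfun f \<gamma>"
      using U_near[of "\<epsilon> * h" y] e0 h0 by auto
    have "\<exists>\<eta>. admissible \<eta> \<and> \<eta> 1 = y + h *\<^sub>R v \<and>
           Jfun f \<gamma> - \<epsilon> * h + h * root CARD('n) c * root CARD('n) (\<Prod>i\<in>UNIV. v $ i) \<le> Jfun f \<eta>"
    proof (rule extend[OF dvg g1 vpos h0 _ c0, of _ "2 * (h * N)"])
      show "0 < \<epsilon> * h" using e0 h0 by simp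
      show "h * norm v < 2 * (h * N)" using h0 N0 by (simp add: N_def)
      fix w assume "norm (w - y) \<le> 2 * (h * N)"
      moreover have "norm (w - x) \<le> norm (w - y) + norm (y - x)"
        using norm_triangle_ineq[of "w - y" "y - x"] by simp
      ultimately have "norm (w - x) \<le> 2 * (h * N) + h * N" using ny by linarith
      then have "norm (w - x) \<le> r" using hr by linarith
      then have "w \<in> cball x r" by (simp add: dist_norm norm_minus_commute)
      then show "c \<le> f w" by (rule fc)
    qed
    then obtain \<eta>c where ec: "admissible \<eta>c" "\<eta>c 1 = y + h *\<^sub>R v"
      "Jfun f \<gamma> - \<epsilon> * h + h * root CARD('n) c * V \<le> Jfun f \<eta>c" by (auto simp: V_def)
    have "Jfun f \<eta>c \<le> Ufun f x" by (rule J_le_U[OF ec(1)]) (simp add: ec(2) y_def)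
    moreover have "h * root CARD('n) c * V = h * (root CARD('n) c * V)" by simp
    ultimately have "Ufun f x - h * inner p v - \<epsilon> * (h * N) - 2 * (\<epsilon> * h) + h * (root CARD('n) c * V) < Ufun f x"
      using Uy near ec(3) by linarith
    moreover have "h * (root CARD('n) c * V - inner p v) = h * (root CARD('n) c * V) - h * inner p v"
      by (simp add: right_diff_distrib)
    moreover have "h * (\<epsilon> * (N + 2)) = \<epsilon> * (h * N) + 2 * (\<epsilon> * h)" by (simp add: algebra_simps)
    ultimately have "h * (root CARD('n) c * V - inner p v) < h * (\<epsilon> * (N + 2))"
      by linarith
    then have "\<kappa> < \<epsilon> * (N + 2)" using h0 by (simp add: \<kappa>_def)
    then show False using N0 by (simp add: \<epsilon>_def)
  qed
qed

end


theorem theorem2p6: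
  fixes f :: "real^'n \<Rightarrow> real"
  assumes "CARD('n) \<ge> 2"
    and "bounded (range f)"
    and "f \<in> borel_measurable borel"
    and "\<forall>x. 0 \<le> f x"
    and "support f \<subseteq> {x. \<forall>i. 0 \<le> x $ i \<and> x $ i \<le> 1}"
  shows "pareto_monotone (Ufun f)
       \<and> viscosity_solution (Ufun f) (\<lambda>x. f x / real CARD('n) ^ CARD('n)) UNIV
       \<and> (\<forall>z. support f \<subseteq> {x. 0 \<le> x \<and> x \<le> z} \<longrightarrow>
              (\<forall>x. (\<forall>i. 0 < x $ i) \<longrightarrow> Ufun f x = Ufun f (\<chi> i. min (x $ i) (z $ i))))
       \<and> (\<forall>x. \<not> (\<forall>i. 0 < x $ i) \<longrightarrow> Ufun f x = 0)"
proof -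
  obtain B where B: "\<And>x. \<bar>f x\<bar> \<le> B" using assms(2) unfolding bounded_iff by (metis rangeI real_norm_def)
  have sub: "f x \<noteq> 0 \<Longrightarrow> x \<in> support f" for x
    unfolding support_def using closure_subset[of "{x. f x \<noteq> 0}"] by (simp add: subset_iff)
  have n: "0 \<le> f x" for x using assms(4) by simp
  have b: "f x \<le> B" for x using B[of x] by simp
  have sp: "x \<in> {0..1}" if "f x \<noteq> 0" for x
  proof -
    have "x \<in> support f" using sub that .
    then have "x \<in> {x. \<forall>i. 0 \<le> x $ i \<and> x $ i \<le> 1}" by (rule subsetD[OF assms(5)])
    then show "x \<in> {0..1}" by (simp add: less_eq_vec_def)
  qed
  interpret setting f B by (rule setting.intro[OF assms(3) n b sp])
  have A1: "pareto_monotone (Ufun f)" unfolding pareto_monotone_def by (intro allI impI) (rule U_mono)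
  have A2: "viscosity_solution (Ufun f) (\<lambda>x. f x / real CARD('n) ^ CARD('n)) UNIV"
    unfolding viscosity_solution_def
  proof (intro conjI ballI)
    show "open (UNIV :: (real^'n) set)" by simp
    show "continuous_on UNIV (Ufun f)" by (rule U_cont)
    show "(\<Prod>i\<in>UNIV. p $ i) \<le> usc_env (\<lambda>x. f x / real CARD('n) ^ CARD('n)) x"
      if "p \<in> superdiff (Ufun f) x" for x p using that by (rule subsol)
    show "lsc_env (\<lambda>x. f x / real CARD('n) ^ CARD('n)) x \<le> (\<Prod>i\<in>UNIV. p $ i)"
      if "p \<in> subdiff (Ufun f) x" for x p using that by (rule supersol)
  qed
  have A3: "\<forall>z. support f \<subseteq> {x. 0 \<le> x \<and> x \<le> z} \<longrightarrow>
              (\<forall>x. (\<forall>i. 0 < x $ i) \<longrightarrow> Ufun f x = Ufun f (\<chi> i. min (x $ i) (z $ i)))"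
  proof (intro allI impI)
    fix z x :: "real^'n" assume z: "support f \<subseteq> {x. 0 \<le> x \<and> x \<le> z}"
    have "f y \<noteq> 0 \<Longrightarrow> y \<le> z" for y using sub[of y] z by blast
    then show "Ufun f x = Ufun f (\<chi> i. min (x $ i) (z $ i))" by (rule U_trunc)
  qed
  have A4: "\<forall>x. \<not> (\<forall>i. 0 < x $ i) \<longrightarrow> Ufun f x = 0"
  proof (intro allI impI)
    fix x :: "real^'n" assume "\<not> (\<forall>i. 0 < x $ i)"
    then obtain i where "x $ i \<le> 0" by (auto simp: not_less)
    then show "Ufun f x = 0" by (rule U_zero)
  qed
  show ?thesis using A1 A2 A3 A4 by (intro conjI)
qed

end
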